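(* Let $(M_t)_{t\ge0}$, $(N_t)_{t\ge0}$ be $d$-dimensional processes with independent increments on sublinear expectation spaces $(\Omega_1,\mathcal{H}_1,\hat{\mathbb{E}}_1)$, $(\Omega_2,\mathcal{H}_2,\hat{\mathbb{E}}_2)$ satisfying condition (A) of the context. Let $\Omega=\Omega_1\times\Omega_2$, and for $\omega=(\omega_1,\omega_2)$ and $t\in[0,1]$ put $\tilde M_t(\omega)=M_t(\omega_1)$, $\tilde N_t(\omega)=N_t(\omega_2)$, $X_t=(\tilde M_t,\tilde N_t)$. Fix $n\ge1$, $\delta_n=2^{-n}$, let $\mathcal{H}^n=\{\varphi(X_{\delta_n},X_{2\delta_n}-X_{\delta_n},\dots,X_{2^n\delta_n}-X_{(2^n-1)\delta_n}):\varphi\in C_{b.Lip}(\mathbb{R}^{2^n\times2d})\}$, and define $\hat{\mathbb{E}}^n:\mathcal{H}^n\to\mathbb{R}$ as follows. Step 1: for $k\le 2^n$ and $\phi\in C_{b.Lip}(\mathbb{R}^{2d})$, $\hat{\mathbb{E}}^n[\phi(X_{k\delta_n}-X_{(k-1)\delta_n})]=\hat{\mathbb{E}}_1[\psi(M_{k\delta_n}-M_{(k-1)\delta_n})]$ where $\psi(x)=\hat{\mathbb{E}}_2[\phi(x,N_{k\delta_n}-N_{(k-1)\delta_n})]$, $x\in\mathbb{R}^d$. Step 2: for $\varphi\in C_{b.Lip}(\mathbb{R}^{2^n\times2d})$, $\hat{\mathbb{E}}^n[\varphi(X_{\delta_n},\dots,X_{2^n\delta_n}-X_{(2^n-1)\delta_n})]=\varphi_0$,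 where $\varphi_{2^n}=\varphi$ and, backwards for $k=2^n,\dots,1$, $\varphi_{k-1}(x_1,\dots,x_{k-1})=\hat{\mathbb{E}}^n[\varphi_k(x_1,\dots,x_{k-1},X_{k\delta_n}-X_{(k-1)\delta_n})]$ computed by Step 1. Then: (1) $(\Omega,\mathcal{H}^n,\hat{\mathbb{E}}^n)$ is a sublinear expectation space; (2) for each $2\le k\le 2^n$, $X_{k\delta_n}-X_{(k-1)\delta_n}$ is independent from $(X_{\delta_n},\dots,X_{(k-1)\delta_n}-X_{(k-2)\delta_n})$ under $\hat{\mathbb{E}}^n$; (3) $(\tilde M_{\delta_n},\tilde M_{2\delta_n}-\tilde M_{\delta_n},\dots,\tilde M_{2^n\delta_n}-\tilde M_{(2^n-1)\delta_n})$ under $\hat{\mathbb{E}}^n$ has the same distribution as $(M_{\delta_n},M_{2\delta_n}-M_{\delta_n},\dots,M_{2^n\delta_n}-M_{(2^n-1)\delta_n})$ under $\hat{\mathbb{E}}_1$, and likewise $(\tilde N_{\delta_n},\dots,\tilde N_{2^n\delta_n}-\tilde N_{(2^n-1)\delta_n})\overset{d}{=}(N_{\delta_n},\dots,N_{2^n\delta_n}-N_{(2^n-1)\delta_n})$.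
   Context: $C_{b.Lip}(\mathbb{R}^d)$: bounded Lipschitz functions. A sublinear expectation space $(\Omega,\mathcal{H},\hat{\mathbb{E}})$: $\mathcal{H}$ is a linear space of real functions on $\Omega$ closed under composition with $C_{b.Lip}$ functions, and $\hat{\mathbb{E}}:\mathcal{H}\to\mathbb{R}$ is monotone, constant preserving, subadditive, positively homogeneous. A sublinear $\tilde{\mathbb{E}}$ dominates $\hat{\mathbb{E}}$ if $\hat{\mathbb{E}}[X]-\hat{\mathbb{E}}[Y]\le\tilde{\mathbb{E}}[X-Y]$. Condition (A): there exist sublinear expectations $\tilde{\mathbb{E}}_i$ on $\mathcal{H}_i$ dominating $\hat{\mathbb{E}}_i$ ($i=1,2$) with $\lim_{s\to t}(\tilde{\mathbb{E}}_1[|M_s-M_t|]+\tilde{\mathbb{E}}_2[|N_s-N_t|])=0$ for each $t\ge0$. $Y$ is independent from $X$ under $\hat{\mathbb{E}}$ if $\hat{\mathbb{E}}[\varphi(X,Y)]=\hat{\mathbb{E}}[\hat{\mathbb{E}}[\varphi(x,Y)]_{x=X}]$ for all bounded Lipschitz $\varphi$. A process with $X_0=0$ has independent increments if for all $t_1<\dots<t_n$, $X_{t_n}-X_{t_{n-1}}$ is independent from $(X_{t_1},\dots,X_{t_{n-1}})$. $\overset{d}{=}$ means equal expectations of $\varphi(\cdot)$ for all bounded Lipschitz $\varphi$. *)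

theory Defs
  imports "HOL-Analysis.Analysis"
begin

text \<open>Vectors in R^I are functions I => real (only coordinates in the finite index set I matter).
  R^m is the index set {..<m}; R^(K x D) is {..<K} x {..<D}.\<close>

definition vnorm :: "'i set \<Rightarrow> ('i \<Rightarrow> real) \<Rightarrow> real" where
  "vnorm I x = sqrt (\<Sum>i\<in>I. (x i)\<^sup>2)"

definition cblip :: "'i set \<Rightarrow> (('i \<Rightarrow> real) \<Rightarrow> real) \<Rightarrow> bool" where
  "cblip I \<phi> \<longleftrightarrow> (\<exists>B. \<forall>x. \<bar>\<phi> x\<bar> \<le> B) \<and>
     (\<exists>L. \<forall>x y. \<bar>\<phi> x - \<phi> y\<bar> \<le> L * vnorm I (\<lambda>i. x i - y i))"

definition sublinear_expectation :: "('w \<Rightarrow> real) set \<Rightarrow> (('w \<Rightarrow> real) \<Rightarrow> real) \<Rightarrow> bool" where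
  "sublinear_expectation H E \<longleftrightarrow>
     (\<forall>X\<in>H. \<forall>Y\<in>H. (\<forall>w. Y w \<le> X w) \<longrightarrow> E Y \<le> E X) \<and>
     (\<forall>c. E (\<lambda>_. c) = c) \<and>
     (\<forall>X\<in>H. \<forall>Y\<in>H. E (\<lambda>w. X w + Y w) \<le> E X + E Y) \<and>
     (\<forall>l::real. \<forall>X\<in>H. l \<ge> 0 \<longrightarrow> E (\<lambda>w. l * X w) = l * E X)"

definition sublinear_expectation_space :: "('w \<Rightarrow> real) set \<Rightarrow> (('w \<Rightarrow> real) \<Rightarrow> real) \<Rightarrow> bool" where
  "sublinear_expectation_space H E \<longleftrightarrow>
     (\<lambda>_. 0) \<in> H \<and> (\<forall>X\<in>H. \<forall>Y\<in>H. (\<lambda>w. X w + Y w) \<in> H) \<and>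
     (\<forall>c::real. \<forall>X\<in>H. (\<lambda>w. c * X w) \<in> H) \<and>
     (\<forall>(n::nat) (X::nat \<Rightarrow> 'w \<Rightarrow> real) \<phi>. (\<forall>i<n. X i \<in> H) \<and> cblip {..<n} \<phi> \<longrightarrow>
         (\<lambda>w. \<phi> (\<lambda>i. X i w)) \<in> H) \<and>
     sublinear_expectation H E"

definition dominates :: "('w \<Rightarrow> real) set \<Rightarrow> (('w \<Rightarrow> real) \<Rightarrow> real) \<Rightarrow> (('w \<Rightarrow> real) \<Rightarrow> real) \<Rightarrow> bool" where
  "dominates H Et E \<longleftrightarrow> (\<forall>X\<in>H. \<forall>Y\<in>H. E X - E Y \<le> Et (\<lambda>w. X w - Y w))"

text \<open>Y (valued in R^J) is independent from X (valued in R^I) under E.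
  A pair (x,y) in R^(I+J) is encoded as case_sum x y.\<close>
definition indep :: "(('w \<Rightarrow> real) \<Rightarrow> real) \<Rightarrow> 'i set \<Rightarrow> 'j set \<Rightarrow>
    ('w \<Rightarrow> 'i \<Rightarrow> real) \<Rightarrow> ('w \<Rightarrow> 'j \<Rightarrow> real) \<Rightarrow> bool" where
  "indep E I J X Y \<longleftrightarrow> (\<forall>\<phi>. cblip (I <+> J) \<phi> \<longrightarrow>
     E (\<lambda>w. \<phi> (case_sum (X w) (Y w))) = E (\<lambda>w. E (\<lambda>w'. \<phi> (case_sum (X w) (Y w')))))"

definition process_in :: "('w \<Rightarrow> real) set \<Rightarrow> nat \<Rightarrow> (real \<Rightarrow> 'w \<Rightarrow> nat \<Rightarrow> real) \<Rightarrow> bool" where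
  "process_in H d M \<longleftrightarrow> (\<forall>t\<ge>0. \<forall>i<d. (\<lambda>w. M t w i) \<in> H)"

definition indep_increments :: "(('w \<Rightarrow> real) \<Rightarrow> real) \<Rightarrow> nat \<Rightarrow> (real \<Rightarrow> 'w \<Rightarrow> nat \<Rightarrow> real) \<Rightarrow> bool" where
  "indep_increments E d M \<longleftrightarrow> (\<forall>w. \<forall>i<d. M 0 w i = 0) \<and>
     (\<forall>(m::nat) (t::nat \<Rightarrow> real). m \<ge> 1 \<and> 0 \<le> t 0 \<and> (\<forall>j<m. t j < t (Suc j)) \<longrightarrow>
        indep E ({..<m} \<times> {..<d}) {..<d}
          (\<lambda>w (j, i). M (t j) w i) (\<lambda>w i. M (t m) w i - M (t (m - 1)) w i))"

definition condition_A :: "('a \<Rightarrow> real) set \<Rightarrow> (('a \<Rightarrow> real) \<Rightarrow> real) \<Rightarrow>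
    ('b \<Rightarrow> real) set \<Rightarrow> (('b \<Rightarrow> real) \<Rightarrow> real) \<Rightarrow> nat \<Rightarrow>
    (real \<Rightarrow> 'a \<Rightarrow> nat \<Rightarrow> real) \<Rightarrow> (real \<Rightarrow> 'b \<Rightarrow> nat \<Rightarrow> real) \<Rightarrow> bool" where
  "condition_A H1 E1 H2 E2 d M N \<longleftrightarrow> (\<exists>Et1 Et2.
     sublinear_expectation H1 Et1 \<and> dominates H1 Et1 E1 \<and>
     sublinear_expectation H2 Et2 \<and> dominates H2 Et2 E2 \<and>
     (\<forall>s\<ge>0. \<forall>t\<ge>0. (\<lambda>w. vnorm {..<d} (\<lambda>i. M s w i - M t w i)) \<in> H1 \<and>
                     (\<lambda>w. vnorm {..<d} (\<lambda>i. N s w i - N t w i)) \<in> H2) \<and>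
     (\<forall>t\<ge>0. ((\<lambda>s. Et1 (\<lambda>w. vnorm {..<d} (\<lambda>i. M s w i - M t w i)) +
                 Et2 (\<lambda>w. vnorm {..<d} (\<lambda>i. N s w i - N t w i))) \<longlongrightarrow> 0) (at t within {0..})))"

definition dlt :: "nat \<Rightarrow> real" where "dlt n = 1 / 2 ^ n"

definition Xproc :: "nat \<Rightarrow> (real \<Rightarrow> 'a \<Rightarrow> nat \<Rightarrow> real) \<Rightarrow> (real \<Rightarrow> 'b \<Rightarrow> nat \<Rightarrow> real) \<Rightarrow>
    real \<Rightarrow> 'a \<times> 'b \<Rightarrow> nat \<Rightarrow> real" where
  "Xproc d M N t \<omega> = (\<lambda>i. if i < d then M t (fst \<omega>) i else N t (snd \<omega>) (i - d))"

text \<open>j-th increment (0-indexed): P_{(j+1) delta_n} - P_{j delta_n}.\<close>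
definition incr :: "nat \<Rightarrow> (real \<Rightarrow> 'w \<Rightarrow> nat \<Rightarrow> real) \<Rightarrow> nat \<Rightarrow> 'w \<Rightarrow> nat \<Rightarrow> real" where
  "incr n P j w = (\<lambda>i. P (real (Suc j) * dlt n) w i - P (real j * dlt n) w i)"

definition Mtil :: "(real \<Rightarrow> 'a \<Rightarrow> nat \<Rightarrow> real) \<Rightarrow> real \<Rightarrow> 'a \<times> 'b \<Rightarrow> nat \<Rightarrow> real" where
  "Mtil M t \<omega> = M t (fst \<omega>)"

definition Ntil :: "(real \<Rightarrow> 'b \<Rightarrow> nat \<Rightarrow> real) \<Rightarrow> real \<Rightarrow> 'a \<times> 'b \<Rightarrow> nat \<Rightarrow> real" where
  "Ntil N t \<omega> = N t (snd \<omega>)"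

definition step1 :: "(('a \<Rightarrow> real) \<Rightarrow> real) \<Rightarrow> (('b \<Rightarrow> real) \<Rightarrow> real) \<Rightarrow> nat \<Rightarrow>
    (real \<Rightarrow> 'a \<Rightarrow> nat \<Rightarrow> real) \<Rightarrow> (real \<Rightarrow> 'b \<Rightarrow> nat \<Rightarrow> real) \<Rightarrow> nat \<Rightarrow> nat \<Rightarrow>
    ((nat \<Rightarrow> real) \<Rightarrow> real) \<Rightarrow> real" where
  "step1 E1 E2 d M N n j \<phi> =
     (let \<psi> = (\<lambda>x. E2 (\<lambda>w2. \<phi> (\<lambda>i. if i < d then x i else incr n N j w2 (i - d))))
      in E1 (\<lambda>w1. \<psi> (incr n M j w1)))"

definition rowupd :: "(nat \<times> nat \<Rightarrow> real) \<Rightarrow> nat \<Rightarrow> (nat \<Rightarrow> real) \<Rightarrow> nat \<times> nat \<Rightarrow> real" where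
  "rowupd x r y = (\<lambda>(j, i). if j = r then y i else x (j, i))"

text \<open>Step 2: backward recursion. bwd ... m phi = phi_{2^n - m}, a function of the matrix
  (x_1,...,x_{2^n}) (rows 0..2^n-1) depending only on the first 2^n - m rows.\<close>
fun bwd :: "(('a \<Rightarrow> real) \<Rightarrow> real) \<Rightarrow> (('b \<Rightarrow> real) \<Rightarrow> real) \<Rightarrow> nat \<Rightarrow>
    (real \<Rightarrow> 'a \<Rightarrow> nat \<Rightarrow> real) \<Rightarrow> (real \<Rightarrow> 'b \<Rightarrow> nat \<Rightarrow> real) \<Rightarrow> nat \<Rightarrow>
    ((nat \<times> nat \<Rightarrow> real) \<Rightarrow> real) \<Rightarrow> nat \<Rightarrow> (nat \<times> nat \<Rightarrow> real) \<Rightarrow> real" where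
  "bwd E1 E2 d M N n \<phi> 0 = \<phi>"
| "bwd E1 E2 d M N n \<phi> (Suc m) = (\<lambda>x.
     step1 E1 E2 d M N n (2 ^ n - Suc m)
       (\<lambda>y. bwd E1 E2 d M N n \<phi> m (rowupd x (2 ^ n - Suc m) y)))"

definition val_n :: "(('a \<Rightarrow> real) \<Rightarrow> real) \<Rightarrow> (('b \<Rightarrow> real) \<Rightarrow> real) \<Rightarrow> nat \<Rightarrow>
    (real \<Rightarrow> 'a \<Rightarrow> nat \<Rightarrow> real) \<Rightarrow> (real \<Rightarrow> 'b \<Rightarrow> nat \<Rightarrow> real) \<Rightarrow> nat \<Rightarrow>
    ((nat \<times> nat \<Rightarrow> real) \<Rightarrow> real) \<Rightarrow> real" where
  "val_n E1 E2 d M N n \<phi> = bwd E1 E2 d M N n \<phi> (2 ^ n) (\<lambda>_. 0)"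

definition incmat :: "nat \<Rightarrow> (real \<Rightarrow> 'a \<Rightarrow> nat \<Rightarrow> real) \<Rightarrow> (real \<Rightarrow> 'b \<Rightarrow> nat \<Rightarrow> real) \<Rightarrow>
    nat \<Rightarrow> 'a \<times> 'b \<Rightarrow> nat \<times> nat \<Rightarrow> real" where
  "incmat d M N n \<omega> = (\<lambda>(j, i). incr n (Xproc d M N) j \<omega> i)"

definition H_n :: "nat \<Rightarrow> (real \<Rightarrow> 'a \<Rightarrow> nat \<Rightarrow> real) \<Rightarrow> (real \<Rightarrow> 'b \<Rightarrow> nat \<Rightarrow> real) \<Rightarrow>
    nat \<Rightarrow> ('a \<times> 'b \<Rightarrow> real) set" where
  "H_n d M N n = {(\<lambda>\<omega>. \<phi> (incmat d M N n \<omega>)) | \<phi>. cblip ({..<2 ^ n} \<times> {..<2 * d}) \<phi>}"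

definition E_n :: "(('a \<Rightarrow> real) \<Rightarrow> real) \<Rightarrow> (('b \<Rightarrow> real) \<Rightarrow> real) \<Rightarrow> nat \<Rightarrow>
    (real \<Rightarrow> 'a \<Rightarrow> nat \<Rightarrow> real) \<Rightarrow> (real \<Rightarrow> 'b \<Rightarrow> nat \<Rightarrow> real) \<Rightarrow> nat \<Rightarrow>
    ('a \<times> 'b \<Rightarrow> real) \<Rightarrow> real" where
  "E_n E1 E2 d M N n \<xi> = val_n E1 E2 d M N n
     (SOME \<phi>. cblip ({..<2 ^ n} \<times> {..<2 * d}) \<phi> \<and> \<xi> = (\<lambda>\<omega>. \<phi> (incmat d M N n \<omega>)))"

end

theory Submission
  imports Defs
begin


definition dep :: "'i set \<Rightarrow> (('i\<Rightarrow>real)\<Rightarrow>real) \<Rightarrow> bool" where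
  "dep S f \<longleftrightarrow> (\<forall>x y. (\<forall>c\<in>S. x c = y c) \<longrightarrow> f x = f y)"

lemma depD: "dep S f \<Longrightarrow> (\<And>c. c\<in>S \<Longrightarrow> x c = y c) \<Longrightarrow> f x = f y"
  unfolding dep_def by blast

lemma dep_mono: "dep S f \<Longrightarrow> S \<subseteq> T \<Longrightarrow> dep T f"
  unfolding dep_def by blast

lemma dep_Int: assumes "dep S f" "dep T f" shows "dep (S \<inter> T) f"
  unfolding dep_def
proof (intro allI impI)
  fix x y :: "_ \<Rightarrow> real" assume h: "\<forall>c\<in>S \<inter> T. x c = y c"
  define z where "z = (\<lambda>c. if c \<in> S then x c else y c)"
  have "f x = f z" by (rule depD[OF assms(1)]) (simp add: z_def)
  also have "f z = f y" by (rule depD[OF assms(2)]) (use h in \<open>auto simp: z_def\<close>)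
  finally show "f x = f y" .
qed

lemma vnorm_nonneg: "0 \<le> vnorm I f"
  unfolding vnorm_def by (simp add: sum_nonneg)

lemma vnorm_coord: "finite I \<Longrightarrow> c \<in> I \<Longrightarrow> \<bar>f c\<bar> \<le> vnorm I f"
proof -
  assume "finite I" "c \<in> I"
  hence "\<bar>f c\<bar> \<le> L2_set (\<lambda>i. \<bar>f i\<bar>) I" by (rule member_le_L2_set)
  thus ?thesis unfolding vnorm_def L2_set_def by simp
qed

lemma vnorm_le_card: assumes "finite I" "\<And>c. c \<in> I \<Longrightarrow> \<bar>f c\<bar> \<le> B"
  shows "vnorm I f \<le> real (card I) * B"
proof -
  have "vnorm I f \<le> (\<Sum>i\<in>I. \<bar>f i\<bar>)"
    using L2_set_le_sum_abs[where f=f and A=I] unfolding vnorm_def L2_set_def .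
  also have "\<dots> \<le> (\<Sum>i\<in>I. B)" by (rule sum_mono) (use assms in auto)
  finally show ?thesis by simp
qed

lemma vnorm_triangle: "vnorm I (\<lambda>i. f i + g i) \<le> vnorm I f + vnorm I g"
  using L2_set_triangle_ineq[where f=f and A=I and g=g] unfolding vnorm_def L2_set_def .

lemma vnorm_cong: "(\<And>c. c \<in> I \<Longrightarrow> f c = g c) \<Longrightarrow> vnorm I f = vnorm I g"
  unfolding vnorm_def by simp

lemma cblip_dep: assumes "cblip I f" shows "dep I f"
  unfolding dep_def
proof (intro allI impI)
  fix x y :: "_ \<Rightarrow> real" assume h: "\<forall>c\<in>I. x c = y c"
  obtain L where L: "\<forall>x y. \<bar>f x - f y\<bar> \<le> L * vnorm I (\<lambda>i. x i - y i)"
    using assms unfolding cblip_def by blast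
  have "vnorm I (\<lambda>i. x i - y i) = 0" unfolding vnorm_def using h by simp
  with L[rule_format, of x y] show "f x = f y" by simp
qed

lemma cblip_Lip: assumes "cblip I f"
  obtains L where "L \<ge> 0" "\<And>x y. \<bar>f x - f y\<bar> \<le> L * vnorm I (\<lambda>i. x i - y i)"
proof -
  obtain L where L: "\<forall>x y. \<bar>f x - f y\<bar> \<le> L * vnorm I (\<lambda>i. x i - y i)"
    using assms unfolding cblip_def by blast
  show ?thesis
  proof (rule that[of "max L 0"])
    fix x y
    have "L * vnorm I (\<lambda>i. x i - y i) \<le> max L 0 * vnorm I (\<lambda>i. x i - y i)"
      by (rule mult_right_mono) (auto simp: vnorm_nonneg)
    thus "\<bar>f x - f y\<bar> \<le> max L 0 * vnorm I (\<lambda>i. x i - y i)" using L by (meson order_trans)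
  qed simp
qed

lemma cblip_bnd: assumes "cblip I f" obtains B where "\<And>x. \<bar>f x\<bar> \<le> B"
  using assms unfolding cblip_def by blast

lemma cblipI: "(\<And>x. \<bar>f x\<bar> \<le> B) \<Longrightarrow> (\<And>x y. \<bar>f x - f y\<bar> \<le> L * vnorm I (\<lambda>i. x i - y i)) \<Longrightarrow> cblip I f"
  unfolding cblip_def by blast

lemma cblip_const: "cblip I (\<lambda>_. c)"
  by (rule cblipI[of _ "\<bar>c\<bar>" 0]) auto

lemma cblip_comp:
  assumes fin: "finite I" and f: "cblip I \<phi>"
    and g: "\<And>u u' c. c \<in> I \<Longrightarrow> \<bar>g u c - g u' c\<bar> \<le> C * vnorm J (\<lambda>j. u j - u' j)"
  shows "cblip J (\<lambda>u. \<phi> (g u))"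
proof -
  obtain B where B: "\<And>x. \<bar>\<phi> x\<bar> \<le> B" using cblip_bnd[OF f] by blast
  obtain L where L0: "L \<ge> 0" and L: "\<And>x y. \<bar>\<phi> x - \<phi> y\<bar> \<le> L * vnorm I (\<lambda>i. x i - y i)"
    using cblip_Lip[OF f] by blast
  show ?thesis
  proof (rule cblipI[of _ B "L * (real (card I) * C)"])
    fix u u'
    have "vnorm I (\<lambda>i. g u i - g u' i) \<le> real (card I) * (C * vnorm J (\<lambda>j. u j - u' j))"
      by (rule vnorm_le_card[OF fin]) (rule g)
    hence "L * vnorm I (\<lambda>i. g u i - g u' i) \<le> L * (real (card I) * (C * vnorm J (\<lambda>j. u j - u' j)))"
      by (rule mult_left_mono) (rule L0)
    with L[of "g u" "g u'"] show "\<bar>\<phi> (g u) - \<phi> (g u')\<bar> \<le> L * (real (card I) * C) * vnorm J (\<lambda>i. u i - u' i)"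
      by (simp add: algebra_simps)
  qed (rule B)
qed

lemma cblip_bin:
  assumes f: "cblip I f" and g: "cblip I g" and K: "K \<ge> 0"
    and h: "\<And>a b a' b'. \<bar>h a b - h a' b'\<bar> \<le> K * (\<bar>a - a'\<bar> + \<bar>b - b'\<bar>)"
  shows "cblip I (\<lambda>x. h (f x) (g x))"
proof -
  obtain B1 where B1: "\<And>x. \<bar>f x\<bar> \<le> B1" using cblip_bnd[OF f] by blast
  obtain B2 where B2: "\<And>x. \<bar>g x\<bar> \<le> B2" using cblip_bnd[OF g] by blast
  obtain L1 where L1: "\<And>x y. \<bar>f x - f y\<bar> \<le> L1 * vnorm I (\<lambda>i. x i - y i)"
    using cblip_Lip[OF f] by blast
  obtain L2 where L2: "\<And>x y. \<bar>g x - g y\<bar> \<le> L2 * vnorm I (\<lambda>i. x i - y i)"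
    using cblip_Lip[OF g] by blast
  show ?thesis
  proof (rule cblipI[of _ "\<bar>h 0 0\<bar> + K * (B1 + B2)" "K * (L1 + L2)"])
    fix x
    have "\<bar>h (f x) (g x) - h 0 0\<bar> \<le> K * (\<bar>f x\<bar> + \<bar>g x\<bar>)" using h[of "f x" "g x" 0 0] by simp
    moreover have "K * (\<bar>f x\<bar> + \<bar>g x\<bar>) \<le> K * (B1 + B2)"
      by (rule mult_left_mono) (use B1[of x] B2[of x] K in auto)
    ultimately show "\<bar>h (f x) (g x)\<bar> \<le> \<bar>h 0 0\<bar> + K * (B1 + B2)" by linarith
  next
    fix x y
    have "K * (\<bar>f x - f y\<bar> + \<bar>g x - g y\<bar>) \<le> K * (L1 * vnorm I (\<lambda>i. x i - y i) + L2 * vnorm I (\<lambda>i. x i - y i))"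
      by (rule mult_left_mono) (use L1[of x y] L2[of x y] K in auto)
    with h[of "f x" "g x" "f y" "g y"]
    show "\<bar>h (f x) (g x) - h (f y) (g y)\<bar> \<le> K * (L1 + L2) * vnorm I (\<lambda>i. x i - y i)"
      by (simp add: algebra_simps)
  qed
qed

lemma cblip_add: "cblip I f \<Longrightarrow> cblip I g \<Longrightarrow> cblip I (\<lambda>x. f x + g x)"
  by (rule cblip_bin[where K=1]) auto

lemma cblip_min: "cblip I f \<Longrightarrow> cblip I g \<Longrightarrow> cblip I (\<lambda>x. min (f x) (g x))"
  by (rule cblip_bin[where K=1]) (auto simp: min_def)

lemma cblip_absdiff: "cblip I f \<Longrightarrow> cblip I g \<Longrightarrow> cblip I (\<lambda>x. \<bar>f x - g x\<bar>)"
  by (rule cblip_bin[where K=1]) auto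

lemma cblip_scale: "cblip I f \<Longrightarrow> cblip I (\<lambda>x. c * f x)"
  using cblip_bin[of I f f "\<bar>c\<bar>" "\<lambda>a b. c * a"]
  by (simp add: abs_mult right_diff_distrib[symmetric] mult_left_mono)

locale sles =
  fixes H :: "('w \<Rightarrow> real) set" and E :: "('w \<Rightarrow> real) \<Rightarrow> real"
  assumes S: "sublinear_expectation_space H E"
begin

lemma add_in: "X \<in> H \<Longrightarrow> Y \<in> H \<Longrightarrow> (\<lambda>w. X w + Y w) \<in> H"
  using S unfolding sublinear_expectation_space_def by blast
lemma scale_in: "X \<in> H \<Longrightarrow> (\<lambda>w. c * X w) \<in> H"
  using S unfolding sublinear_expectation_space_def by blast
lemma comp_in: "(\<And>i. i < (m::nat) \<Longrightarrow> X i \<in> H) \<Longrightarrow> cblip {..<m} \<phi> \<Longrightarrow> (\<lambda>w. \<phi> (\<lambda>i. X i w)) \<in> H"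
proof -
  assume a: "\<And>i. i < (m::nat) \<Longrightarrow> X i \<in> H" "cblip {..<m} \<phi>"
  have "\<forall>(n::nat) X \<phi>. (\<forall>i<n. X i \<in> H) \<and> cblip {..<n} \<phi> \<longrightarrow> (\<lambda>w. \<phi> (\<lambda>i. X i w)) \<in> H"
    using S unfolding sublinear_expectation_space_def by blast
  from this[rule_format, of m X \<phi>] show ?thesis using a by blast
qed
lemma mono: "X \<in> H \<Longrightarrow> Y \<in> H \<Longrightarrow> (\<And>w. Y w \<le> X w) \<Longrightarrow> E Y \<le> E X"
  using S unfolding sublinear_expectation_space_def sublinear_expectation_def by blast
lemma const: "E (\<lambda>_. c) = c"
  using S unfolding sublinear_expectation_space_def sublinear_expectation_def by blast
lemma subadd: "X \<in> H \<Longrightarrow> Y \<in> H \<Longrightarrow> E (\<lambda>w. X w + Y w) \<le> E X + E Y"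
  using S unfolding sublinear_expectation_space_def sublinear_expectation_def by blast
lemma homog: "l \<ge> 0 \<Longrightarrow> X \<in> H \<Longrightarrow> E (\<lambda>w. l * X w) = l * E X"
  using S unfolding sublinear_expectation_space_def sublinear_expectation_def by blast

lemma const_in: "(\<lambda>_. c) \<in> H"
proof -
  have "(\<lambda>w. (\<lambda>_::nat\<Rightarrow>real. c) (\<lambda>i. (\<lambda>_ _. 0) i w)) \<in> H" by (rule comp_in[of 0]) (auto simp: cblip_const)
  thus ?thesis by simp
qed

lemma diff_in: "X \<in> H \<Longrightarrow> Y \<in> H \<Longrightarrow> (\<lambda>w. X w - Y w) \<in> H"
  using add_in[of X "\<lambda>w. (-1) * Y w"] scale_in[of Y "-1"] by simp

lemma E_le: assumes "X \<in> H" "Y \<in> H" "\<And>w. X w \<le> Y w + c" shows "E X \<le> E Y + c"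
proof -
  have "E X \<le> E (\<lambda>w. Y w + c)" by (rule mono) (use assms in \<open>auto intro: add_in const_in\<close>)
  also have "\<dots> \<le> E Y + E (\<lambda>_. c)" by (rule subadd) (use assms in \<open>auto intro: const_in\<close>)
  finally show ?thesis by (simp add: const)
qed

lemma E_lip: assumes "X \<in> H" "Y \<in> H" "\<And>w. \<bar>X w - Y w\<bar> \<le> c" shows "\<bar>E X - E Y\<bar> \<le> c"
proof -
  have "E X \<le> E Y + c" by (rule E_le) (use assms in \<open>auto simp: abs_le_iff add.commute diff_le_eq\<close>)
  moreover have "E Y \<le> E X + c" by (rule E_le) (use assms in \<open>auto simp: abs_le_iff add.commute diff_le_eq\<close>)
  ultimately show ?thesis by linarith
qed

lemma E_bnd: assumes "X \<in> H" "\<And>w. \<bar>X w\<bar> \<le> c" shows "\<bar>E X\<bar> \<le> c"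
  using E_lip[OF assms(1) const_in[of 0]] assms(2) by (simp add: const)

end


locale ctx =
  fixes H1 :: "('a \<Rightarrow> real) set" and E1 :: "('a \<Rightarrow> real) \<Rightarrow> real"
    and H2 :: "('b \<Rightarrow> real) set" and E2 :: "('b \<Rightarrow> real) \<Rightarrow> real"
    and d n :: nat
    and M :: "real \<Rightarrow> 'a \<Rightarrow> nat \<Rightarrow> real" and N :: "real \<Rightarrow> 'b \<Rightarrow> nat \<Rightarrow> real"
  assumes S1: "sublinear_expectation_space H1 E1"
    and S2: "sublinear_expectation_space H2 E2"
    and PM: "process_in H1 d M" and PN: "process_in H2 d N"
    and IM: "indep_increments E1 d M" and IN: "indep_increments E2 d N"

sublocale ctx \<subseteq> s1: sles H1 E1 by unfold_locales (rule S1)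
sublocale ctx \<subseteq> s2: sles H2 E2 by unfold_locales (rule S2)

lemma dlt_pos: "dlt n > 0" unfolding dlt_def by simp

lemma incr_in_gen:
  assumes S: "sublinear_expectation_space H E" and P: "process_in H d P" and i: "i < d"
  shows "(\<lambda>w. incr n P j w i) \<in> H"
proof -
  interpret sles H E by unfold_locales (rule S)
  have t: "real (Suc j) * dlt n \<ge> 0" "real j * dlt n \<ge> 0" using dlt_pos[of n] by auto
  have "(\<lambda>w. P (real (Suc j) * dlt n) w i) \<in> H" "(\<lambda>w. P (real j * dlt n) w i) \<in> H"
    using P t i unfolding process_in_def by blast+
  from diff_in[OF this] show ?thesis unfolding incr_def .
qed

lemma comp_incr_in_gen:
  assumes S: "sublinear_expectation_space H E" and P: "process_in H d P" and f: "cblip {..<d} f"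
  shows "(\<lambda>w. f (incr n P j w)) \<in> H"
proof -
  interpret sles H E by unfold_locales (rule S)
  have "(\<lambda>w. f (\<lambda>i. incr n P j w i)) \<in> H"
    by (rule comp_in[of d]) (auto intro: incr_in_gen[OF S P] f)
  thus ?thesis by simp
qed

context ctx begin

definition psi :: "nat \<Rightarrow> ((nat\<Rightarrow>real)\<Rightarrow>real) \<Rightarrow> (nat\<Rightarrow>real) \<Rightarrow> real" where
  "psi j f a = E2 (\<lambda>w2. f (\<lambda>i. if i < d then a i else incr n N j w2 (i - d)))"

lemma step1_eq: "step1 E1 E2 d M N n j f = E1 (\<lambda>w1. psi j f (incr n M j w1))"
  unfolding step1_def psi_def Let_def ..

lemma g_in: assumes f: "cblip {..<2*d} f"
  shows "(\<lambda>w2. f (\<lambda>i. if i < d then a i else incr n N j w2 (i - d))) \<in> H2"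
proof -
  have "cblip {..<d} (\<lambda>v. f (\<lambda>i. if i < d then a i else v (i - d)))"
  proof (rule cblip_comp[OF _ f, where C=1])
    fix u u' :: "nat \<Rightarrow> real" and c assume "c \<in> {..<2*d}"
    thus "\<bar>(if c < d then a c else u (c - d)) - (if c < d then a c else u' (c - d))\<bar>
       \<le> 1 * vnorm {..<d} (\<lambda>j. u j - u' j)"
      using vnorm_coord[of "{..<d}" "c - d" "\<lambda>j. u j - u' j"] by (auto simp: vnorm_nonneg)
  qed simp
  from comp_incr_in_gen[OF S2 PN this, where n=n and j=j] show ?thesis by simp
qed

lemma psi_cblip: assumes f: "cblip {..<2*d} f" shows "cblip {..<d} (psi j f)"
proof -
  obtain B where B: "\<And>x. \<bar>f x\<bar> \<le> B" using cblip_bnd[OF f] by blast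
  obtain L where L0: "L \<ge> 0" and L: "\<And>x y. \<bar>f x - f y\<bar> \<le> L * vnorm {..<2*d} (\<lambda>i. x i - y i)"
    using cblip_Lip[OF f] by blast
  show ?thesis
  proof (rule cblipI[where B=B and L="L * real (card {..<2*d})"])
    fix a show "\<bar>psi j f a\<bar> \<le> B" unfolding psi_def by (rule s2.E_bnd[OF g_in[OF f]]) (rule B)
  next
    fix a a' :: "nat \<Rightarrow> real"
    have "\<bar>psi j f a - psi j f a'\<bar> \<le> L * (real (card {..<2*d}) * vnorm {..<d} (\<lambda>i. a i - a' i))"
      unfolding psi_def
    proof (rule s2.E_lip[OF g_in[OF f] g_in[OF f]])
      fix w
      let ?u = "\<lambda>i. if i < d then a i else incr n N j w (i - d)"
      let ?u' = "\<lambda>i. if i < d then a' i else incr n N j w (i - d)"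
      have "vnorm {..<2*d} (\<lambda>i. ?u i - ?u' i) \<le> real (card {..<2*d}) * vnorm {..<d} (\<lambda>i. a i - a' i)"
        by (rule vnorm_le_card) (auto intro: vnorm_coord simp: vnorm_nonneg)
      hence "L * vnorm {..<2*d} (\<lambda>i. ?u i - ?u' i) \<le> L * (real (card {..<2*d}) * vnorm {..<d} (\<lambda>i. a i - a' i))"
        by (rule mult_left_mono) (rule L0)
      with L[of ?u ?u'] show "\<bar>f ?u - f ?u'\<bar> \<le> L * (real (card {..<2*d}) * vnorm {..<d} (\<lambda>i. a i - a' i))"
        by linarith
    qed
    thus "\<bar>psi j f a - psi j f a'\<bar> \<le> L * real (card {..<2*d}) * vnorm {..<d} (\<lambda>i. a i - a' i)"
      by (simp add: mult.assoc)
  qed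
qed

lemma psi_in: "cblip {..<2*d} f \<Longrightarrow> (\<lambda>w1. psi j f (incr n M j w1)) \<in> H1"
  by (rule comp_incr_in_gen[OF S1 PM psi_cblip])

lemma step1_lip: assumes f: "cblip {..<2*d} f" and g: "cblip {..<2*d} g" and c: "\<And>y. \<bar>f y - g y\<bar> \<le> c"
  shows "\<bar>step1 E1 E2 d M N n j f - step1 E1 E2 d M N n j g\<bar> \<le> c"
  unfolding step1_eq
proof (rule s1.E_lip[OF psi_in[OF f] psi_in[OF g]])
  fix w show "\<bar>psi j f (incr n M j w) - psi j g (incr n M j w)\<bar> \<le> c"
    unfolding psi_def by (rule s2.E_lip[OF g_in[OF f] g_in[OF g]]) (rule c)
qed

lemma step1_const: "step1 E1 E2 d M N n j (\<lambda>_. c) = c"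
  unfolding step1_eq psi_def by (simp add: s1.const s2.const)

lemma step1_bnd: assumes f: "cblip {..<2*d} f" and c: "\<And>y. \<bar>f y\<bar> \<le> c"
  shows "\<bar>step1 E1 E2 d M N n j f\<bar> \<le> c"
  using step1_lip[OF f cblip_const[of _ 0], of c j] c by (simp add: step1_const)

lemma step1_mono: assumes f: "cblip {..<2*d} f" and g: "cblip {..<2*d} g" and le: "\<And>y. f y \<le> g y"
  shows "step1 E1 E2 d M N n j f \<le> step1 E1 E2 d M N n j g"
  unfolding step1_eq
proof (rule s1.mono[OF psi_in[OF g] psi_in[OF f]])
  fix w show "psi j f (incr n M j w) \<le> psi j g (incr n M j w)"
    unfolding psi_def by (rule s2.mono[OF g_in[OF g] g_in[OF f]]) (rule le)
qed

lemma step1_add: assumes f: "cblip {..<2*d} f" and g: "cblip {..<2*d} g"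
  shows "step1 E1 E2 d M N n j (\<lambda>y. f y + g y) \<le> step1 E1 E2 d M N n j f + step1 E1 E2 d M N n j g"
proof -
  have fg: "cblip {..<2*d} (\<lambda>y. f y + g y)" by (rule cblip_add[OF f g])
  have "step1 E1 E2 d M N n j (\<lambda>y. f y + g y) \<le> E1 (\<lambda>w. psi j f (incr n M j w) + psi j g (incr n M j w))"
    unfolding step1_eq
  proof (rule s1.mono[OF s1.add_in[OF psi_in[OF f] psi_in[OF g]] psi_in[OF fg]])
    fix w show "psi j (\<lambda>y. f y + g y) (incr n M j w) \<le> psi j f (incr n M j w) + psi j g (incr n M j w)"
      unfolding psi_def by (rule s2.subadd[OF g_in[OF f] g_in[OF g]])
  qed
  also have "\<dots> \<le> step1 E1 E2 d M N n j f + step1 E1 E2 d M N n j g"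
    unfolding step1_eq by (rule s1.subadd[OF psi_in[OF f] psi_in[OF g]])
  finally show ?thesis .
qed

lemma step1_scale: assumes f: "cblip {..<2*d} f" and l: "l \<ge> 0"
  shows "step1 E1 E2 d M N n j (\<lambda>y. l * f y) = l * step1 E1 E2 d M N n j f"
proof -
  have "\<And>a. psi j (\<lambda>y. l * f y) a = l * psi j f a"
    unfolding psi_def by (rule s2.homog[OF l g_in[OF f]])
  hence "step1 E1 E2 d M N n j (\<lambda>y. l * f y) = E1 (\<lambda>w. l * psi j f (incr n M j w))"
    unfolding step1_eq by simp
  also have "\<dots> = l * step1 E1 E2 d M N n j f"
    unfolding step1_eq by (rule s1.homog[OF l psi_in[OF f]])
  finally show ?thesis .
qed

lemma step1_M: assumes f: "dep {..<d} f"
  shows "step1 E1 E2 d M N n j f = E1 (\<lambda>w. f (incr n M j w))"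
proof -
  have "\<And>a w2. f (\<lambda>i. if i < d then a i else incr n N j w2 (i - d)) = f a"
    by (rule depD[OF f]) simp
  thus ?thesis unfolding step1_eq psi_def by (simp add: s2.const)
qed

lemma step1_N: assumes f: "dep {i. d \<le> i} f"
  shows "step1 E1 E2 d M N n j f = E2 (\<lambda>w. f (\<lambda>i. if i < d then 0 else incr n N j w (i - d)))"
proof -
  have eq: "\<And>a w2. f (\<lambda>i. if i < d then a i else incr n N j w2 (i - d)) = f (\<lambda>i. if i < d then 0 else incr n N j w2 (i - d))"
    by (rule depD[OF f]) simp
  have "(\<lambda>w1. psi j f (incr n M j w1)) = (\<lambda>_. E2 (\<lambda>w. f (\<lambda>i. if i < d then 0 else incr n N j w (i - d))))"
    unfolding psi_def by (rule ext, rule arg_cong[where f=E2], rule ext, rule eq)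
  thus ?thesis unfolding step1_eq by (simp only: s1.const)
qed

end




lemma rowupd_x: "\<bar>rowupd x r y c - rowupd x' r y c\<bar> \<le> \<bar>x c - x' c\<bar>"
  by (cases c) (auto simp: rowupd_def)

context ctx begin

abbreviation "BW \<phi> m \<equiv> bwd E1 E2 d M N n \<phi> m"
abbreviation "II \<equiv> {..<(2::nat)^n} \<times> {..<2*d}"

lemma finII: "finite II" by simp

lemma F_cblip: assumes G: "cblip II G" shows "cblip {..<2*d} (\<lambda>y. G (rowupd x r y))"
proof (rule cblip_comp[OF finII G, where C=1])
  fix u u' :: "nat \<Rightarrow> real" and c assume "c \<in> II"
  thus "\<bar>rowupd x r u c - rowupd x r u' c\<bar> \<le> 1 * vnorm {..<2*d} (\<lambda>j. u j - u' j)"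
    using vnorm_coord[of "{..<2*d}" "snd c" "\<lambda>j. u j - u' j"]
    by (cases c) (auto simp: rowupd_def vnorm_nonneg)
qed

lemma bwd_cblip: "cblip II \<phi> \<Longrightarrow> cblip II (BW \<phi> m)"
proof (induction m)
  case 0 thus ?case by simp
next
  case (Suc m)
  have IH: "cblip II (BW \<phi> m)" using Suc by blast
  obtain Bd where Bd: "\<And>x. \<bar>BW \<phi> m x\<bar> \<le> Bd" using cblip_bnd[OF IH] by blast
  obtain L where L0: "L \<ge> 0" and L: "\<And>x y. \<bar>BW \<phi> m x - BW \<phi> m y\<bar> \<le> L * vnorm II (\<lambda>i. x i - y i)"
    using cblip_Lip[OF IH] by blast
  define r where "r = 2^n - Suc m"
  show ?case
  proof (rule cblipI[where B=Bd and L="L * real (card II)"])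
    fix x show "\<bar>BW \<phi> (Suc m) x\<bar> \<le> Bd"
      by (simp add: r_def[symmetric]) (rule step1_bnd[OF F_cblip[OF IH] Bd])
  next
    fix x x' :: "nat \<times> nat \<Rightarrow> real"
    have "\<bar>step1 E1 E2 d M N n r (\<lambda>y. BW \<phi> m (rowupd x r y)) - step1 E1 E2 d M N n r (\<lambda>y. BW \<phi> m (rowupd x' r y))\<bar>
        \<le> L * (real (card II) * vnorm II (\<lambda>i. x i - x' i))"
    proof (rule step1_lip[OF F_cblip[OF IH] F_cblip[OF IH]])
      fix y
      have "vnorm II (\<lambda>i. rowupd x r y i - rowupd x' r y i) \<le> real (card II) * vnorm II (\<lambda>i. x i - x' i)"
        by (rule vnorm_le_card[OF finII]) (rule order_trans[OF rowupd_x vnorm_coord[OF finII]])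
      hence "L * vnorm II (\<lambda>i. rowupd x r y i - rowupd x' r y i) \<le> L * (real (card II) * vnorm II (\<lambda>i. x i - x' i))"
        by (rule mult_left_mono) (rule L0)
      with L[of "rowupd x r y" "rowupd x' r y"]
      show "\<bar>BW \<phi> m (rowupd x r y) - BW \<phi> m (rowupd x' r y)\<bar> \<le> L * (real (card II) * vnorm II (\<lambda>i. x i - x' i))"
        by linarith
    qed
    thus "\<bar>BW \<phi> (Suc m) x - BW \<phi> (Suc m) x'\<bar> \<le> L * real (card II) * vnorm II (\<lambda>i. x i - x' i)"
      by (simp add: r_def[symmetric] mult.assoc)
  qed
qed

lemma bwd_mono: "cblip II \<phi> \<Longrightarrow> cblip II \<phi>' \<Longrightarrow> (\<And>x. \<phi> x \<le> \<phi>' x) \<Longrightarrow> BW \<phi> m x \<le> BW \<phi>' m x"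
proof (induction m arbitrary: x)
  case 0 thus ?case by simp
next
  case (Suc m)
  show ?case
    by simp (rule step1_mono[OF F_cblip[OF bwd_cblip] F_cblip[OF bwd_cblip]], (rule Suc)+)
qed

lemma bwd_const: "BW (\<lambda>_. c) m = (\<lambda>_. c)"
  by (induction m) (simp_all add: step1_const)

lemma bwd_add: assumes f: "cblip II \<phi>" and g: "cblip II \<psi>"
  shows "BW (\<lambda>x. \<phi> x + \<psi> x) m x \<le> BW \<phi> m x + BW \<psi> m x"
proof (induction m arbitrary: x)
  case 0 thus ?case by simp
next
  case (Suc m)
  define r where "r = 2^n - Suc m"
  have fg: "cblip II (\<lambda>x. \<phi> x + \<psi> x)" by (rule cblip_add[OF f g])
  have "step1 E1 E2 d M N n r (\<lambda>y. BW (\<lambda>x. \<phi> x + \<psi> x) m (rowupd x r y))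
      \<le> step1 E1 E2 d M N n r (\<lambda>y. BW \<phi> m (rowupd x r y) + BW \<psi> m (rowupd x r y))"
    by (rule step1_mono[OF F_cblip[OF bwd_cblip[OF fg]] cblip_add[OF F_cblip[OF bwd_cblip[OF f]] F_cblip[OF bwd_cblip[OF g]]]])
      (rule Suc)
  also have "\<dots> \<le> step1 E1 E2 d M N n r (\<lambda>y. BW \<phi> m (rowupd x r y)) + step1 E1 E2 d M N n r (\<lambda>y. BW \<psi> m (rowupd x r y))"
    by (rule step1_add[OF F_cblip[OF bwd_cblip[OF f]] F_cblip[OF bwd_cblip[OF g]]])
  finally show ?case by (simp add: r_def[symmetric])
qed

lemma bwd_scale: assumes f: "cblip II \<phi>" and l: "l \<ge> 0"
  shows "BW (\<lambda>x. l * \<phi> x) m = (\<lambda>x. l * BW \<phi> m x)"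
proof (induction m)
  case 0 thus ?case by simp
next
  case (Suc m)
  show ?case by (simp add: Suc step1_scale[OF F_cblip[OF bwd_cblip[OF f]] l])
qed

lemma bwd_dep: "dep S \<phi> \<Longrightarrow> S \<subseteq> {c. fst c < 2^n} \<Longrightarrow> dep (S \<inter> {c. fst c < 2^n - m}) (BW \<phi> m)"
proof (induction m)
  case 0 thus ?case by simp (erule dep_mono, blast)
next
  case (Suc m)
  have IH: "dep (S \<inter> {c. fst c < 2^n - m}) (BW \<phi> m)" using Suc by blast
  show ?case unfolding dep_def
  proof (intro allI impI)
    fix x x' :: "nat \<times> nat \<Rightarrow> real" assume h: "\<forall>c\<in>S \<inter> {c. fst c < 2 ^ n - Suc m}. x c = x' c"
    have "\<And>y. BW \<phi> m (rowupd x (2^n - Suc m) y) = BW \<phi> m (rowupd x' (2^n - Suc m) y)"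
    proof (rule depD[OF IH])
      fix y c assume c: "c \<in> S \<inter> {c. fst c < 2 ^ n - m}"
      show "rowupd x (2^n - Suc m) y c = rowupd x' (2^n - Suc m) y c"
      proof (cases "fst c = 2^n - Suc m")
        case True thus ?thesis by (cases c) (auto simp: rowupd_def)
      next
        case False
        with c have "c \<in> S \<inter> {c. fst c < 2 ^ n - Suc m}" by auto
        with h False show ?thesis by (cases c) (auto simp: rowupd_def)
      qed
    qed
    thus "BW \<phi> (Suc m) x = BW \<phi> (Suc m) x'" by simp
  qed
qed

lemma bwd_triv: "dep {c. fst c < 2^n - m} \<phi> \<Longrightarrow> BW \<phi> m = \<phi>"
proof (induction m)
  case 0 thus ?case by simp
next
  case (Suc m)
  have "dep {c. fst c < 2^n - m} \<phi>" by (rule dep_mono[OF Suc.prems]) auto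
  hence IH: "BW \<phi> m = \<phi>" by (rule Suc.IH)
  have "\<And>x y. \<phi> (rowupd x (2^n - Suc m) y) = \<phi> x"
    by (rule depD[OF Suc.prems]) (auto simp: rowupd_def)
  thus ?case by (simp add: IH step1_const)
qed

lemma bwd_from_const: "BW \<phi> m = (\<lambda>_. c) \<Longrightarrow> BW \<phi> (m + t) = (\<lambda>_. c)"
  by (induction t) (simp_all add: step1_const)

lemma bwd_shift: "BW \<phi> m = BW \<psi> m \<Longrightarrow> BW \<phi> (m + t) = BW \<psi> (m + t)"
  by (induction t) simp_all

end

lemma finite_Plus_sets: "finite A \<Longrightarrow> finite B \<Longrightarrow> finite (A <+> B)"
  by simp

lemma chain_step:
  assumes S: "sublinear_expectation_space H E" and IP: "indep_increments E d P"
    and Gc: "cblip ({..<K}\<times>{..<d}) G1"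
    and Gd: "dep {c. fst c < Suc k \<and> snd c < d} G1"
    and Gr: "\<And>x. G0 x = E (\<lambda>w. G1 (rowupd x k (incr n P k w)))"
  shows "E (\<lambda>w. G1 (\<lambda>(j,i). incr n P j w i)) = E (\<lambda>w. G0 (\<lambda>(j,i). incr n P j w i))"
proof -
  define R where "R = (\<lambda>w. \<lambda>(j,i). incr n P j w i)"
  define t where "t = (\<lambda>j::nat. real j * dlt n)"
  define J where "J = ({..<Suc k}\<times>{..<d}) <+> {..<d}"
  define z where "z = (\<lambda>u::(nat\<times>nat)+nat \<Rightarrow> real. \<lambda>(j,i). if j < k then u (Inl (Suc j, i)) - u (Inl (j,i)) else u (Inr i))"
  define f where "f = (\<lambda>u. G1 (z u))"
  have finJ: "finite J" unfolding J_def by simp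
  have fc: "cblip J f" unfolding f_def
  proof (rule cblip_comp[OF _ Gc, where C=2])
    fix u u' :: "(nat\<times>nat)+nat \<Rightarrow> real" and c assume c: "c \<in> {..<K}\<times>{..<d}"
    obtain j i where ji: "c = (j,i)" by (cases c)
    have v: "\<And>a. a \<in> J \<Longrightarrow> \<bar>u a - u' a\<bar> \<le> vnorm J (\<lambda>j. u j - u' j)"
      by (rule vnorm_coord[OF finJ, of _ "\<lambda>j. u j - u' j", simplified])
    have vn: "0 \<le> vnorm J (\<lambda>j. u j - u' j)" by (rule vnorm_nonneg)
    show "\<bar>z u c - z u' c\<bar> \<le> 2 * vnorm J (\<lambda>j. u j - u' j)"
    proof (cases "j < k")
      case True
      have "Inl (Suc j, i) \<in> J" "Inl (j, i) \<in> J" using True c ji unfolding J_def by auto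
      with v[of "Inl (Suc j, i)"] v[of "Inl (j, i)"] True ji show ?thesis
        unfolding z_def by auto
    next
      case False
      have "Inr i \<in> J" using c ji unfolding J_def by auto
      with v[of "Inr i"] vn False ji show ?thesis unfolding z_def by auto
    qed
  qed simp
  have tinc: "\<forall>j<Suc k. t j < t (Suc j)" unfolding t_def using dlt_pos[of n] by auto
  have "indep E ({..<Suc k} \<times> {..<d}) {..<d}
          (\<lambda>w (j, i). P (t j) w i) (\<lambda>w i. P (t (Suc k)) w i - P (t (Suc k - 1)) w i)"
  proof -
    have "\<forall>(m::nat) (t::nat \<Rightarrow> real). m \<ge> 1 \<and> 0 \<le> t 0 \<and> (\<forall>j<m. t j < t (Suc j)) \<longrightarrow>
        indep E ({..<m} \<times> {..<d}) {..<d}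
          (\<lambda>w (j, i). P (t j) w i) (\<lambda>w i. P (t m) w i - P (t (m - 1)) w i)"
      using IP unfolding indep_increments_def by blast
    from this[rule_format, of "Suc k" t] tinc show ?thesis by (simp add: t_def)
  qed
  hence ind: "E (\<lambda>w. f (case_sum ((\<lambda>w (j, i). P (t j) w i) w) (\<lambda>i. P (t (Suc k)) w i - P (t k) w i)))
     = E (\<lambda>w. E (\<lambda>w'. f (case_sum ((\<lambda>w (j, i). P (t j) w i) w) (\<lambda>i. P (t (Suc k)) w' i - P (t k) w' i))))"
    using fc unfolding indep_def J_def by simp
  have a: "\<And>w. f (case_sum ((\<lambda>w (j, i). P (t j) w i) w) (\<lambda>i. P (t (Suc k)) w i - P (t k) w i)) = G1 (R w)"
    unfolding f_def
  proof (rule depD[OF Gd])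
    fix w c assume c: "c \<in> {c. fst c < Suc k \<and> snd c < d}"
    obtain j i where ji: "c = (j,i)" by (cases c)
    show "z (case_sum ((\<lambda>w (j, i). P (t j) w i) w) (\<lambda>i. P (t (Suc k)) w i - P (t k) w i)) c = R w c"
      using c ji unfolding z_def R_def incr_def t_def by (auto simp: less_Suc_eq)
  qed
  have b: "\<And>w. E (\<lambda>w'. f (case_sum ((\<lambda>w (j, i). P (t j) w i) w) (\<lambda>i. P (t (Suc k)) w' i - P (t k) w' i))) = G0 (R w)"
  proof -
    fix w
    have "\<And>w'. f (case_sum ((\<lambda>w (j, i). P (t j) w i) w) (\<lambda>i. P (t (Suc k)) w' i - P (t k) w' i))
        = G1 (rowupd (R w) k (incr n P k w'))"
      unfolding f_def
    proof (rule depD[OF Gd])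
      fix w' c assume c: "c \<in> {c. fst c < Suc k \<and> snd c < d}"
      obtain j i where ji: "c = (j,i)" by (cases c)
      show "z (case_sum ((\<lambda>w (j, i). P (t j) w i) w) (\<lambda>i. P (t (Suc k)) w' i - P (t k) w' i)) c = rowupd (R w) k (incr n P k w') c"
        using c ji unfolding z_def R_def incr_def t_def rowupd_def by (auto simp: less_Suc_eq)
    qed
    thus "E (\<lambda>w'. f (case_sum ((\<lambda>w (j, i). P (t j) w i) w) (\<lambda>i. P (t (Suc k)) w' i - P (t k) w' i))) = G0 (R w)"
      by (simp add: Gr)
  qed
  from ind show ?thesis unfolding a b R_def .
qed


lemma chain:
  assumes S: "sublinear_expectation_space H E" and IP: "indep_increments E d P"
    and Gc: "\<And>k. k \<le> K \<Longrightarrow> cblip ({..<K}\<times>{..<d}) (G k)"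
    and Gd: "\<And>k. k \<le> K \<Longrightarrow> dep {c. fst c < k \<and> snd c < d} (G k)"
    and Gr: "\<And>k x. k < K \<Longrightarrow> G k x = E (\<lambda>w. G (Suc k) (rowupd x k (incr n P k w)))"
  shows "E (\<lambda>w. G K (\<lambda>(j,i). incr n P j w i)) = G 0 x0"
proof -
  interpret sles H E by unfold_locales (rule S)
  define R where "R = (\<lambda>w. \<lambda>(j,i). incr n P j w i)"
  have "\<And>t. t \<le> K \<Longrightarrow> E (\<lambda>w. G K (R w)) = E (\<lambda>w. G (K - t) (R w))"
  proof -
    fix t show "t \<le> K \<Longrightarrow> E (\<lambda>w. G K (R w)) = E (\<lambda>w. G (K - t) (R w))"
    proof (induction t)
      case 0 thus ?case by simp
    next
      case (Suc t)
      define k where "k = K - Suc t"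
      have sk: "Suc k = K - t" "k < K" using Suc.prems unfolding k_def by auto
      have "E (\<lambda>w. G (Suc k) (R w)) = E (\<lambda>w. G k (R w))" unfolding R_def
        by (rule chain_step[OF S IP Gc Gd Gr[OF sk(2)]]) (use sk in auto)
      thus ?case using Suc sk unfolding k_def by simp
    qed
  qed
  from this[of K] have "E (\<lambda>w. G K (R w)) = E (\<lambda>w. G 0 (R w))" by simp
  also have "(\<lambda>w. G 0 (R w)) = (\<lambda>w. G 0 x0)"
    by (rule ext, rule depD[OF Gd[of 0]]) auto
  finally show ?thesis unfolding R_def by (simp add: const)
qed

lemma cblip_restrict:
  assumes fin: "finite I" and f: "cblip I f" and dS: "dep S f" and sub: "S \<inter> I \<subseteq> I'" and fin': "finite I'"
  shows "cblip I' f"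
proof -
  have "cblip I' (\<lambda>x. f (\<lambda>c. if c \<in> S then x c else 0))"
  proof (rule cblip_comp[OF fin f, where C=1])
    fix u u' :: "_ \<Rightarrow> real" and c assume c: "c \<in> I"
    show "\<bar>(if c \<in> S then u c else 0) - (if c \<in> S then u' c else 0)\<bar> \<le> 1 * vnorm I' (\<lambda>j. u j - u' j)"
      using c sub vnorm_coord[OF fin', of c "\<lambda>j. u j - u' j"] by (auto simp: vnorm_nonneg)
  qed
  moreover have "(\<lambda>x. f (\<lambda>c. if c \<in> S then x c else 0)) = f"
    by (rule ext, rule depD[OF dS]) auto
  ultimately show ?thesis by simp
qed

context ctx begin

abbreviation "IM \<equiv> {..<(2::nat)^n} \<times> {..<d}"

lemma VM:
  assumes c: "cblip II \<psi>" and dm: "dep {c. snd c < d} \<psi>"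
  shows "BW \<psi> (2^n) x0 = E1 (\<lambda>w. \<psi> (\<lambda>(j,i). incr n M j w i))"
proof -
  define G where "G = (\<lambda>k. BW \<psi> (2^n - k))"
  have dI: "dep ({c. snd c < d} \<inter> II) \<psi>" by (rule dep_Int[OF dm cblip_dep[OF c]])
  have Gd: "dep {c. fst c < k \<and> snd c < d} (G k)" if "k \<le> 2^n" for k
  proof -
    have "dep (({c. snd c < d} \<inter> II) \<inter> {c. fst c < 2^n - (2^n - k)}) (G k)"
      unfolding G_def by (rule bwd_dep[OF dI]) auto
    thus ?thesis by (rule dep_mono) (use that in auto)
  qed
  have Gc: "cblip IM (G k)" if "k \<le> 2^n" for k
    by (rule cblip_restrict[OF finII _ Gd[OF that]]) (auto simp: G_def intro: bwd_cblip[OF c])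
  have Gr: "G k x = E1 (\<lambda>w. G (Suc k) (rowupd x k (incr n M k w)))" if k: "k < 2^n" for k x
  proof -
    have e: "2^n - k = Suc (2^n - Suc k)" "2^n - Suc (2^n - Suc k) = k" using k by auto
    have "dep {..<d} (\<lambda>y. G (Suc k) (rowupd x k y))"
      unfolding dep_def
    proof (intro allI impI)
      fix y y' :: "nat \<Rightarrow> real" assume "\<forall>c\<in>{..<d}. y c = y' c"
      thus "G (Suc k) (rowupd x k y) = G (Suc k) (rowupd x k y')"
        by (intro depD[OF Gd]) (use k in \<open>auto simp: rowupd_def\<close>)
    qed
    from step1_M[OF this, of k] show ?thesis unfolding G_def by (simp add: e)
  qed
  have "E1 (\<lambda>w. G (2^n) (\<lambda>(j,i). incr n M j w i)) = G 0 x0"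
    by (rule chain[OF S1 IM Gc Gd Gr]) auto
  thus ?thesis unfolding G_def by simp
qed

definition shN :: "(nat \<times> nat \<Rightarrow> real) \<Rightarrow> nat \<times> nat \<Rightarrow> real" where
  "shN x = (\<lambda>(j,i). if i < d then 0 else x (j, i - d))"

lemma VN:
  assumes c: "cblip II \<psi>" and dm: "dep {c. d \<le> snd c} \<psi>"
  shows "BW \<psi> (2^n) x0 = E2 (\<lambda>w. \<psi> (shN (\<lambda>(j,i). incr n N j w i)))"
proof -
  define G where "G = (\<lambda>k x. BW \<psi> (2^n - k) (shN x))"
  have dI: "dep ({c. d \<le> snd c} \<inter> II) \<psi>" by (rule dep_Int[OF dm cblip_dep[OF c]])
  have Gd: "dep {c. fst c < k \<and> snd c < d} (G k)" if "k \<le> 2^n" for k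
  proof -
    have D: "dep (({c. d \<le> snd c} \<inter> II) \<inter> {c. fst c < 2^n - (2^n - k)}) (BW \<psi> (2^n - k))"
      by (rule bwd_dep[OF dI]) auto
    show ?thesis unfolding dep_def G_def
    proof (intro allI impI)
      fix x x' :: "nat \<times> nat \<Rightarrow> real" assume h: "\<forall>c\<in>{c. fst c < k \<and> snd c < d}. x c = x' c"
      show "BW \<psi> (2^n - k) (shN x) = BW \<psi> (2^n - k) (shN x')"
      proof (rule depD[OF D])
        fix c assume "c \<in> {c. d \<le> snd c} \<inter> II \<inter> {c. fst c < 2 ^ n - (2 ^ n - k)}"
        with h that show "shN x c = shN x' c" unfolding shN_def by (cases c) auto
      qed
    qed
  qed
  have Gc: "cblip IM (G k)" if "k \<le> 2^n" for k
    unfolding G_def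
  proof (rule cblip_comp[OF finII bwd_cblip[OF c], where C=1])
    fix u u' :: "nat \<times> nat \<Rightarrow> real" and c assume "c \<in> II"
    thus "\<bar>shN u c - shN u' c\<bar> \<le> 1 * vnorm IM (\<lambda>j. u j - u' j)"
      unfolding shN_def
      using vnorm_coord[of IM "(fst c, snd c - d)" "\<lambda>j. u j - u' j"]
      by (cases c) (auto simp: vnorm_nonneg)
  qed
  have Gr: "G k x = E2 (\<lambda>w. G (Suc k) (rowupd x k (incr n N k w)))" if k: "k < 2^n" for k x
  proof -
    have e: "2^n - k = Suc (2^n - Suc k)" "2^n - Suc (2^n - Suc k) = k" using k by auto
    have D: "dep ({c. d \<le> snd c}) (BW \<psi> (2^n - Suc k))"
    proof -
      have "dep (({c. d \<le> snd c} \<inter> II) \<inter> {c. fst c < 2^n - (2^n - Suc k)}) (BW \<psi> (2^n - Suc k))"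
        by (rule bwd_dep[OF dI]) auto
      thus ?thesis by (rule dep_mono) auto
    qed
    have "dep {i. d \<le> i} (\<lambda>y. BW \<psi> (2^n - Suc k) (rowupd (shN x) k y))"
      unfolding dep_def
    proof (intro allI impI)
      fix y y' :: "nat \<Rightarrow> real" assume "\<forall>c\<in>{i. d \<le> i}. y c = y' c"
      thus "BW \<psi> (2^n - Suc k) (rowupd (shN x) k y) = BW \<psi> (2^n - Suc k) (rowupd (shN x) k y')"
        by (intro depD[OF D]) (auto simp: rowupd_def)
    qed
    from step1_N[OF this, of k]
    have "G k x = E2 (\<lambda>w. BW \<psi> (2^n - Suc k) (rowupd (shN x) k (\<lambda>i. if i < d then 0 else incr n N k w (i - d))))"
      unfolding G_def by (simp add: e)
    also have "(\<lambda>w. rowupd (shN x) k (\<lambda>i. if i < d then 0 else incr n N k w (i - d))) = (\<lambda>w. shN (rowupd x k (incr n N k w)))"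
      by (intro ext) (auto simp: rowupd_def shN_def)
    finally show ?thesis unfolding G_def by (simp add: e)
  qed
  have "E2 (\<lambda>w. G (2^n) (\<lambda>(j,i). incr n N j w i)) = G 0 x0"
    by (rule chain[OF S2 IN Gc Gd Gr]) auto
  moreover have "BW \<psi> (2^n) (shN x0) = BW \<psi> (2^n) x0"
    by (rule depD[OF bwd_dep[OF cblip_dep[OF c], of "2^n"]]) auto
  ultimately show ?thesis unfolding G_def by simp
qed

end


lemma vnorm_swap: "vnorm I (\<lambda>c. y c - x c) = vnorm I (\<lambda>c. x c - y c)"
  unfolding vnorm_def by (simp add: power2_commute)

lemma INF_dist_lip:
  fixes F :: "'w \<Rightarrow> 'z \<Rightarrow> real"
  assumes nn: "\<And>w z. 0 \<le> F w z" and tri: "\<And>w. F w z \<le> F w z' + D"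
  shows "(INF w. F w z) \<le> (INF w. F w z') + D"
proof -
  have "(INF w. F w z) - D \<le> (INF w. F w z')"
  proof (rule cINF_greatest)
    fix w
    have "(INF w. F w z) \<le> F w z" by (rule cINF_lower) (auto intro: bdd_belowI[where m=0] nn)
    thus "(INF w. F w z) - D \<le> F w z'" using tri[of w] by linarith
  qed simp
  thus ?thesis by linarith
qed

lemma INF_nonneg: fixes F :: "'w \<Rightarrow> real" shows "(\<And>w. 0 \<le> F w) \<Longrightarrow> 0 \<le> (INF w. F w)"
  by (rule cINF_greatest) auto

lemma INF_zero: fixes F :: "'w \<Rightarrow> real" shows "(\<And>w. 0 \<le> F w) \<Longrightarrow> F wz = 0 \<Longrightarrow> (INF w. F w) = 0"
proof -
  assume a: "\<And>w. 0 \<le> F w" "F wz = 0"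
  have "bdd_below (range F)" by (rule bdd_belowI[where m=0]) (use a in auto)
  hence "(INF w. F w) \<le> F wz" by (rule cINF_lower) simp
  thus ?thesis using INF_nonneg[of F] a by simp
qed

context ctx begin

lemma incmat_eq: "incmat d M N n (w1, w2) (j, i) = (if i < d then incr n M j w1 i else incr n N j w2 (i - d))"
  unfolding incmat_def incr_def Xproc_def by simp

lemma val_mono: "cblip II \<phi> \<Longrightarrow> cblip II \<phi>' \<Longrightarrow> (\<And>x. \<phi> x \<le> \<phi>' x) \<Longrightarrow> BW \<phi> m x \<le> BW \<phi>' m x"
  by (rule bwd_mono)

lemma WD_le:
  assumes c: "cblip II \<phi>" and c': "cblip II \<phi>'"
    and eq: "\<And>\<omega>. \<phi> (incmat d M N n \<omega>) = \<phi>' (incmat d M N n \<omega>)"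
  shows "BW \<phi> (2^n) x0 \<le> BW \<phi>' (2^n) x0"
proof -
  obtain C1 where C1: "\<And>x. \<bar>\<phi> x\<bar> \<le> C1" using cblip_bnd[OF c] by blast
  obtain C2 where C2: "\<And>x. \<bar>\<phi>' x\<bar> \<le> C2" using cblip_bnd[OF c'] by blast
  obtain L1 where L1: "L1 \<ge> 0" "\<And>x y. \<bar>\<phi> x - \<phi> y\<bar> \<le> L1 * vnorm II (\<lambda>i. x i - y i)"
    using cblip_Lip[OF c] by blast
  obtain L2 where L2: "L2 \<ge> 0" "\<And>x y. \<bar>\<phi>' x - \<phi>' y\<bar> \<le> L2 * vnorm II (\<lambda>i. x i - y i)"
    using cblip_Lip[OF c'] by blast
  define C where "C = max C1 C2"
  define L where "L = max L1 L2"
  have C0: "C \<ge> 0" using C1[of undefined] unfolding C_def by auto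
  have L0: "L \<ge> 0" using L1 unfolding L_def by auto
  define Lc where "Lc = 2 * L * real (card II)"
  have Lc0: "Lc \<ge> 0" using L0 unfolding Lc_def by simp
  define rM where "rM = (\<lambda>w1. \<lambda>(j,i). incr n M j w1 i)"
  define rN where "rN = (\<lambda>w2. \<lambda>(j,i). incr n N j w2 i)"
  define vM where "vM = (\<lambda>w1 z. vnorm IM (\<lambda>c. z c - rM w1 c))"
  define vN where "vN = (\<lambda>w2 z. vnorm IM (\<lambda>c. z (fst c, snd c + d) - rN w2 c))"
  define dM where "dM = (\<lambda>z. INF w1. vM w1 z)"
  define dN where "dN = (\<lambda>z. INF w2. vN w2 z)"
  define h1 where "h1 = (\<lambda>z. min (2*C) (Lc * dM z))"
  define h2 where "h2 = (\<lambda>z. min (2*C) (Lc * dN z))"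
  have vM0: "\<And>w z. 0 \<le> vM w z" unfolding vM_def by (rule vnorm_nonneg)
  have vN0: "\<And>w z. 0 \<le> vN w z" unfolding vN_def by (rule vnorm_nonneg)
  have dM0: "\<And>z. 0 \<le> dM z" unfolding dM_def by (rule INF_nonneg[OF vM0])
  have dN0: "\<And>z. 0 \<le> dN z" unfolding dN_def by (rule INF_nonneg[OF vN0])
  have key: "\<phi> z \<le> \<phi>' z + (h1 z + h2 z)" for z
  proof -
    define X where "X = \<bar>\<phi> z - \<phi>' z\<bar>"
    have X2C: "X \<le> 2 * C" using C1[of z] C2[of z] unfolding X_def C_def by auto
    have Xw: "X \<le> Lc * (vM w1 z + vN w2 z)" for w1 w2
    proof -
      define r where "r = incmat d M N n (w1, w2)"
      have "vnorm II (\<lambda>i. z i - r i) \<le> real (card II) * (vM w1 z + vN w2 z)"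
      proof (rule vnorm_le_card[OF finII])
        fix c assume c: "c \<in> II"
        obtain j i where ji: "c = (j, i)" by (cases c)
        show "\<bar>z c - r c\<bar> \<le> vM w1 z + vN w2 z"
        proof (cases "i < d")
          case True
          have "\<bar>z c - rM w1 c\<bar> \<le> vM w1 z" unfolding vM_def
            by (rule vnorm_coord[where f="\<lambda>c. z c - rM w1 c"]) (use c ji True in auto)
          thus ?thesis using vN0[of w2 z] True ji unfolding r_def rM_def by (simp add: incmat_eq)
        next
          case False
          have "\<bar>z (fst (j, i - d), snd (j, i - d) + d) - rN w2 (j, i - d)\<bar> \<le> vN w2 z" unfolding vN_def
            by (rule vnorm_coord[where f="\<lambda>c. z (fst c, snd c + d) - rN w2 c"]) (use c ji False in auto)
          thus ?thesis using vM0[of w1 z] False ji unfolding r_def rN_def by (simp add: incmat_eq)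
        qed
      qed
      hence "L * vnorm II (\<lambda>i. z i - r i) \<le> L * (real (card II) * (vM w1 z + vN w2 z))"
        by (rule mult_left_mono[OF _ L0])
      moreover have "2 * (L * (real (card II) * (vM w1 z + vN w2 z))) = Lc * (vM w1 z + vN w2 z)"
        unfolding Lc_def by (simp only: mult.assoc)
      ultimately have v: "2 * L * vnorm II (\<lambda>i. z i - r i) \<le> Lc * (vM w1 z + vN w2 z)"
        by linarith
      have "X \<le> \<bar>\<phi> z - \<phi> r\<bar> + \<bar>\<phi>' r - \<phi>' z\<bar>" unfolding X_def using eq[of "(w1,w2)"] r_def by auto
      also have "\<dots> \<le> L * vnorm II (\<lambda>i. z i - r i) + L * vnorm II (\<lambda>i. z i - r i)"
      proof -
        have "\<bar>\<phi> z - \<phi> r\<bar> \<le> L * vnorm II (\<lambda>i. z i - r i)"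
          using L1(2)[of z r] mult_right_mono[of L1 L "vnorm II (\<lambda>i. z i - r i)"] vnorm_nonneg[of II "\<lambda>i. z i - r i"]
          unfolding L_def by auto
        moreover have "\<bar>\<phi>' r - \<phi>' z\<bar> \<le> L * vnorm II (\<lambda>i. z i - r i)"
          using L2(2)[of z r] mult_right_mono[of L2 L "vnorm II (\<lambda>i. z i - r i)"] vnorm_nonneg[of II "\<lambda>i. z i - r i"]
          unfolding L_def by (auto simp: abs_minus_commute)
        ultimately show ?thesis by linarith
      qed
      finally show ?thesis using v by linarith
    qed
    have XL: "X \<le> Lc * (dM z + dN z)"
    proof (cases "Lc = 0")
      case True thus ?thesis using Xw[of undefined undefined] by simp
    next
      case False
      hence Lp: "Lc > 0" using Lc0 by simp
      have "X / Lc - dM z \<le> dN z" unfolding dN_def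
      proof (rule cINF_greatest)
        fix w2
        have "X / Lc - vN w2 z \<le> dM z" unfolding dM_def
        proof (rule cINF_greatest)
          fix w1 show "X / Lc - vN w2 z \<le> vM w1 z"
            using Xw[of w1 w2] Lp by (simp add: divide_le_eq algebra_simps)
        qed simp
        thus "X / Lc - dM z \<le> vN w2 z" by linarith
      qed simp
      thus ?thesis using Lp by (simp add: divide_le_eq algebra_simps)
    qed
    have p1: "0 \<le> Lc * dM z" by (rule mult_nonneg_nonneg[OF Lc0 dM0])
    have p2: "0 \<le> Lc * dN z" by (rule mult_nonneg_nonneg[OF Lc0 dN0])
    have XL': "X \<le> Lc * dM z + Lc * dN z" using XL by (simp add: distrib_left)
    have "X \<le> min (2*C) (Lc * dM z) + min (2*C) (Lc * dN z)"
      using X2C XL' p1 p2 C0 unfolding min_def by (simp split: if_split)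
    hence "X \<le> h1 z + h2 z" unfolding h1_def h2_def .
    thus ?thesis unfolding X_def by linarith
  qed
  have dM_lip: "dM z \<le> dM z' + vnorm IM (\<lambda>c. z c - z' c)" for z z'
    unfolding dM_def
  proof (rule INF_dist_lip[where F=vM, OF vM0])
    fix w
    have "vM w z = vnorm IM (\<lambda>c. (z' c - rM w c) + (z c - z' c))" unfolding vM_def by simp
    also have "\<dots> \<le> vM w z' + vnorm IM (\<lambda>c. z c - z' c)" unfolding vM_def by (rule vnorm_triangle)
    finally show "vM w z \<le> vM w z' + vnorm IM (\<lambda>c. z c - z' c)" .
  qed
  have dN_lip: "dN z \<le> dN z' + vnorm IM (\<lambda>c. z (fst c, snd c + d) - z' (fst c, snd c + d))" for z z'
    unfolding dN_def
  proof (rule INF_dist_lip[where F=vN, OF vN0])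
    fix w
    have "vN w z = vnorm IM (\<lambda>c. (z' (fst c, snd c + d) - rN w c) + (z (fst c, snd c + d) - z' (fst c, snd c + d)))"
      unfolding vN_def by simp
    also have "\<dots> \<le> vN w z' + vnorm IM (\<lambda>c. z (fst c, snd c + d) - z' (fst c, snd c + d))"
      unfolding vN_def by (rule vnorm_triangle)
    finally show "vN w z \<le> vN w z' + vnorm IM (\<lambda>c. z (fst c, snd c + d) - z' (fst c, snd c + d))" .
  qed
  have imM: "vnorm IM (\<lambda>c. z c - z' c) \<le> real (card IM) * vnorm II (\<lambda>c. z c - z' c)" for z z'
    by (rule vnorm_le_card) (auto intro!: vnorm_coord)
  have imN: "vnorm IM (\<lambda>c. z (fst c, snd c + d) - z' (fst c, snd c + d)) \<le> real (card IM) * vnorm II (\<lambda>c. z c - z' c)" for z z'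
  proof (rule vnorm_le_card)
    fix c assume "c \<in> IM"
    thus "\<bar>z (fst c, snd c + d) - z' (fst c, snd c + d)\<bar> \<le> vnorm II (\<lambda>c. z c - z' c)"
      using vnorm_coord[of II "(fst c, snd c + d)" "\<lambda>c. z c - z' c"] by auto
  qed simp
  have minlip: "\<bar>min a p - min a q\<bar> \<le> \<bar>p - q\<bar>" for a p q :: real by (auto simp: min_def)
  have h1c: "cblip II h1"
  proof (rule cblipI[where B="2*C" and L="Lc * real (card IM)"])
    fix z show "\<bar>h1 z\<bar> \<le> 2 * C" unfolding h1_def using C0 mult_nonneg_nonneg[OF Lc0 dM0[of z]] by (auto simp: min_def)
  next
    fix z z'
    have "\<bar>dM z - dM z'\<bar> \<le> real (card IM) * vnorm II (\<lambda>c. z c - z' c)"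
      using dM_lip[of z z'] dM_lip[of z' z] imM[of z z'] imM[of z' z]
      by (auto simp: abs_le_iff vnorm_swap[of _ z])
    hence "Lc * \<bar>dM z - dM z'\<bar> \<le> Lc * (real (card IM) * vnorm II (\<lambda>c. z c - z' c))"
      by (rule mult_left_mono) (rule Lc0)
    moreover have "\<bar>h1 z - h1 z'\<bar> \<le> Lc * \<bar>dM z - dM z'\<bar>"
      unfolding h1_def using minlip[of "2*C" "Lc * dM z" "Lc * dM z'"] Lc0
      by (simp add: abs_mult right_diff_distrib[symmetric])
    ultimately show "\<bar>h1 z - h1 z'\<bar> \<le> Lc * real (card IM) * vnorm II (\<lambda>i. z i - z' i)"
      by (simp add: mult.assoc)
  qed
  have h2c: "cblip II h2"
  proof (rule cblipI[where B="2*C" and L="Lc * real (card IM)"])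
    fix z show "\<bar>h2 z\<bar> \<le> 2 * C" unfolding h2_def using C0 mult_nonneg_nonneg[OF Lc0 dN0[of z]] by (auto simp: min_def)
  next
    fix z z'
    have "\<bar>dN z - dN z'\<bar> \<le> real (card IM) * vnorm II (\<lambda>c. z c - z' c)"
      using dN_lip[of z z'] dN_lip[of z' z] imN[of z z'] imN[of z' z]
        vnorm_swap[of IM "\<lambda>c. z (fst c, snd c + d)" "\<lambda>c. z' (fst c, snd c + d)"]
      by (auto simp: abs_le_iff vnorm_swap[of _ z])
    hence "Lc * \<bar>dN z - dN z'\<bar> \<le> Lc * (real (card IM) * vnorm II (\<lambda>c. z c - z' c))"
      by (rule mult_left_mono) (rule Lc0)
    moreover have "\<bar>h2 z - h2 z'\<bar> \<le> Lc * \<bar>dN z - dN z'\<bar>"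
      unfolding h2_def using minlip[of "2*C" "Lc * dN z" "Lc * dN z'"] Lc0
      by (simp add: abs_mult right_diff_distrib[symmetric])
    ultimately show "\<bar>h2 z - h2 z'\<bar> \<le> Lc * real (card IM) * vnorm II (\<lambda>i. z i - z' i)"
      by (simp add: mult.assoc)
  qed
  have h1d: "dep {c. snd c < d} h1" unfolding dep_def
  proof (intro allI impI)
    fix z z' :: "nat\<times>nat \<Rightarrow> real" assume h: "\<forall>c\<in>{c. snd c < d}. z c = z' c"
    have "\<And>w. vM w z = vM w z'" unfolding vM_def by (rule vnorm_cong) (use h in auto)
    thus "h1 z = h1 z'" unfolding h1_def dM_def by simp
  qed
  have h2d: "dep {c. d \<le> snd c} h2" unfolding dep_def
  proof (intro allI impI)
    fix z z' :: "nat\<times>nat \<Rightarrow> real" assume h: "\<forall>c\<in>{c. d \<le> snd c}. z c = z' c"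
    have "\<And>w. vN w z = vN w z'" unfolding vN_def by (rule vnorm_cong) (use h in auto)
    thus "h2 z = h2 z'" unfolding h2_def dN_def by simp
  qed
  have v1: "BW h1 (2^n) x0 = 0"
  proof -
    have "dM (rM w) = 0" for w unfolding dM_def
      by (rule INF_zero[where wz=w, OF vM0]) (simp add: vM_def vnorm_def)
    hence "\<And>w. h1 (rM w) = 0" unfolding h1_def using C0 by simp
    thus ?thesis unfolding VM[OF h1c h1d] using rM_def by (simp add: s1.const)
  qed
  have v2: "BW h2 (2^n) x0 = 0"
  proof -
    have "dN (shN (rN w)) = 0" for w unfolding dN_def
      by (rule INF_zero[where wz=w, OF vN0]) (simp add: vN_def vnorm_def shN_def rN_def)
    hence "\<And>w. h2 (shN (rN w)) = 0" unfolding h2_def using C0 by simp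
    thus ?thesis unfolding VN[OF h2c h2d] using rN_def by (simp add: s2.const)
  qed
  have h12: "cblip II (\<lambda>z. h1 z + h2 z)" by (rule cblip_add[OF h1c h2c])
  have "BW \<phi> (2^n) x0 \<le> BW (\<lambda>z. \<phi>' z + (h1 z + h2 z)) (2^n) x0"
    by (rule bwd_mono[OF c cblip_add[OF c' h12] key])
  also have "\<dots> \<le> BW \<phi>' (2^n) x0 + BW (\<lambda>z. h1 z + h2 z) (2^n) x0"
    by (rule bwd_add[OF c' h12])
  also have "BW (\<lambda>z. h1 z + h2 z) (2^n) x0 \<le> BW h1 (2^n) x0 + BW h2 (2^n) x0"
    by (rule bwd_add[OF h1c h2c])
  finally show ?thesis using v1 v2 by simp
qed

lemma WD:
  assumes c: "cblip II \<phi>" and c': "cblip II \<phi>'"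
    and eq: "\<And>\<omega>. \<phi> (incmat d M N n \<omega>) = \<phi>' (incmat d M N n \<omega>)"
  shows "BW \<phi> (2^n) x0 = BW \<phi>' (2^n) x0"
proof (rule antisym)
  show "BW \<phi> (2^n) x0 \<le> BW \<phi>' (2^n) x0" by (rule WD_le[OF c c' eq])
  show "BW \<phi>' (2^n) x0 \<le> BW \<phi> (2^n) x0" by (rule WD_le[OF c' c]) (simp add: eq)
qed

end


context ctx begin

lemma En_eq:
  assumes c: "cblip II \<phi>" and xi: "\<xi> = (\<lambda>\<omega>. \<phi> (incmat d M N n \<omega>))"
  shows "E_n E1 E2 d M N n \<xi> = BW \<phi> (2^n) (\<lambda>_. 0)"
proof -
  define \<phi>0 where "\<phi>0 = (SOME \<phi>. cblip II \<phi> \<and> \<xi> = (\<lambda>\<omega>. \<phi> (incmat d M N n \<omega>)))"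
  have "cblip II \<phi>0 \<and> \<xi> = (\<lambda>\<omega>. \<phi>0 (incmat d M N n \<omega>))"
    unfolding \<phi>0_def by (rule someI[where x=\<phi>]) (use c xi in auto)
  hence c0: "cblip II \<phi>0" and e0': "(\<lambda>\<omega>. \<phi>0 (incmat d M N n \<omega>)) = (\<lambda>\<omega>. \<phi> (incmat d M N n \<omega>))"
    using xi by auto
  have e0: "\<And>\<omega>. \<phi>0 (incmat d M N n \<omega>) = \<phi> (incmat d M N n \<omega>)"
    using fun_cong[OF e0'] by simp
  have "E_n E1 E2 d M N n \<xi> = BW \<phi>0 (2^n) (\<lambda>_. 0)"
    unfolding E_n_def val_n_def \<phi>0_def ..
  also have "\<dots> = BW \<phi> (2^n) (\<lambda>_. 0)" by (rule WD[OF c0 c e0])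
  finally show ?thesis .
qed

lemma Hn_mem: "\<xi> \<in> H_n d M N n \<longleftrightarrow> (\<exists>\<phi>. cblip II \<phi> \<and> \<xi> = (\<lambda>\<omega>. \<phi> (incmat d M N n \<omega>)))"
  unfolding H_n_def by blast

lemma part2: "sublinear_expectation_space (H_n d M N n) (E_n E1 E2 d M N n)"
proof -
  let ?H = "H_n d M N n" and ?E = "E_n E1 E2 d M N n"
  have z: "(\<lambda>_. 0) \<in> ?H" unfolding Hn_mem by (rule exI[of _ "\<lambda>_. 0"]) (simp add: cblip_const)
  have add: "\<forall>X\<in>?H. \<forall>Y\<in>?H. (\<lambda>w. X w + Y w) \<in> ?H"
  proof (intro ballI)
    fix X Y assume "X \<in> ?H" "Y \<in> ?H"
    then obtain f g where "cblip II f" "X = (\<lambda>\<omega>. f (incmat d M N n \<omega>))" "cblip II g" "Y = (\<lambda>\<omega>. g (incmat d M N n \<omega>))"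
      unfolding Hn_mem by blast
    thus "(\<lambda>w. X w + Y w) \<in> ?H" unfolding Hn_mem by (intro exI[of _ "\<lambda>z. f z + g z"]) (auto intro: cblip_add)
  qed
  have sc: "\<forall>c::real. \<forall>X\<in>?H. (\<lambda>w. c * X w) \<in> ?H"
  proof (intro allI ballI)
    fix c :: real and X assume "X \<in> ?H"
    then obtain f where "cblip II f" "X = (\<lambda>\<omega>. f (incmat d M N n \<omega>))" unfolding Hn_mem by blast
    thus "(\<lambda>w. c * X w) \<in> ?H" unfolding Hn_mem by (intro exI[of _ "\<lambda>z. c * f z"]) (auto intro: cblip_scale)
  qed
  have comp: "\<forall>(m::nat) X \<psi>. (\<forall>i<m. X i \<in> ?H) \<and> cblip {..<m} \<psi> \<longrightarrow> (\<lambda>w. \<psi> (\<lambda>i. X i w)) \<in> ?H"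
  proof (intro allI impI)
    fix m :: nat and X :: "nat \<Rightarrow> 'a \<times> 'b \<Rightarrow> real" and \<psi> :: "(nat \<Rightarrow> real) \<Rightarrow> real"
    assume a: "(\<forall>i<m. X i \<in> ?H) \<and> cblip {..<m} \<psi>"
    have "\<forall>i. \<exists>f. i < m \<longrightarrow> cblip II f \<and> X i = (\<lambda>\<omega>. f (incmat d M N n \<omega>))"
      using a unfolding Hn_mem by blast
    from choice[OF this] obtain F where F0: "\<forall>i. i < m \<longrightarrow> cblip II (F i) \<and> X i = (\<lambda>\<omega>. F i (incmat d M N n \<omega>))"
      by blast
    have F: "\<And>i. i < m \<Longrightarrow> cblip II (F i) \<and> X i = (\<lambda>\<omega>. F i (incmat d M N n \<omega>))"
      using F0 by blast
    have "\<forall>i. \<exists>L. i < m \<longrightarrow> L \<ge> 0 \<and> (\<forall>x y. \<bar>F i x - F i y\<bar> \<le> L * vnorm II (\<lambda>c. x c - y c))"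
    proof
      fix i show "\<exists>L. i < m \<longrightarrow> L \<ge> 0 \<and> (\<forall>x y. \<bar>F i x - F i y\<bar> \<le> L * vnorm II (\<lambda>c. x c - y c))"
      proof (cases "i < m")
        case True
        obtain L where "L \<ge> 0" "\<And>x y. \<bar>F i x - F i y\<bar> \<le> L * vnorm II (\<lambda>c. x c - y c)"
          using cblip_Lip[of II "F i"] F[OF True] by blast
        thus ?thesis by blast
      qed simp
    qed
    from choice[OF this] obtain Lf where Lf0: "\<forall>i. i < m \<longrightarrow> Lf i \<ge> 0 \<and> (\<forall>x y. \<bar>F i x - F i y\<bar> \<le> Lf i * vnorm II (\<lambda>c. x c - y c))"
      by blast
    have Lf: "\<And>i. i < m \<Longrightarrow> Lf i \<ge> 0 \<and> (\<forall>x y. \<bar>F i x - F i y\<bar> \<le> Lf i * vnorm II (\<lambda>c. x c - y c))"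
      using Lf0 by blast
    define \<Psi> where "\<Psi> = (\<lambda>z. \<psi> (\<lambda>i. if i < m then F i z else 0))"
    have "cblip II \<Psi>" unfolding \<Psi>_def
    proof (rule cblip_comp[where C="\<Sum>i<m. Lf i" and g="\<lambda>z i. if i < m then F i z else 0" and \<phi>=\<psi> and I="{..<m}"])
      fix u u' :: "nat \<times> nat \<Rightarrow> real" and c assume c: "c \<in> {..<m}"
      have "Lf c \<le> (\<Sum>i<m. Lf i)" by (rule member_le_sum) (use c Lf in auto)
      hence "Lf c * vnorm II (\<lambda>j. u j - u' j) \<le> (\<Sum>i<m. Lf i) * vnorm II (\<lambda>j. u j - u' j)"
        by (rule mult_right_mono) (rule vnorm_nonneg)
      thus "\<bar>(if c < m then F c u else 0) - (if c < m then F c u' else 0)\<bar> \<le> (\<Sum>i<m. Lf i) * vnorm II (\<lambda>j. u j - u' j)"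
      proof -
        have "\<bar>F c u - F c u'\<bar> \<le> Lf c * vnorm II (\<lambda>j. u j - u' j)" using c Lf[of c] by auto
        thus ?thesis using c \<open>Lf c * _ \<le> _\<close> by (simp only: lessThan_iff if_True)
      qed
    next
      show "finite {..<m}" by simp
    next
      show "cblip {..<m} \<psi>" using a by blast
    qed
    moreover have "(\<lambda>w. \<psi> (\<lambda>i. X i w)) = (\<lambda>\<omega>. \<Psi> (incmat d M N n \<omega>))"
    proof
      fix w show "\<psi> (\<lambda>i. X i w) = \<Psi> (incmat d M N n w)" unfolding \<Psi>_def
      proof (rule depD[OF cblip_dep[of "{..<m}" \<psi>]])
        show "cblip {..<m} \<psi>" using a by blast
      next
        fix i assume "i \<in> {..<m}"
        hence im: "i < m" by simp
        have "X i w = F i (incmat d M N n w)" using F[OF im] by simp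
        thus "X i w = (if i < m then F i (incmat d M N n w) else 0)" using im by simp
      qed
    qed
    ultimately show "(\<lambda>w. \<psi> (\<lambda>i. X i w)) \<in> ?H" unfolding Hn_mem by blast
  qed
  have se: "sublinear_expectation ?H ?E"
    unfolding sublinear_expectation_def
  proof (intro conjI allI ballI impI)
    fix X Y assume X: "X \<in> ?H" and Y: "Y \<in> ?H" and le: "\<forall>w. Y w \<le> X w"
    obtain f where f: "cblip II f" "X = (\<lambda>\<omega>. f (incmat d M N n \<omega>))" using X unfolding Hn_mem by blast
    obtain g where g: "cblip II g" "Y = (\<lambda>\<omega>. g (incmat d M N n \<omega>))" using Y unfolding Hn_mem by blast
    have gm: "cblip II (\<lambda>z. min (g z) (f z))" by (rule cblip_min[OF g(1) f(1)])
    have "Y = (\<lambda>\<omega>. min (g (incmat d M N n \<omega>)) (f (incmat d M N n \<omega>)))"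
      using le f g by (auto simp: fun_eq_iff min_def)
    hence "?E Y = BW (\<lambda>z. min (g z) (f z)) (2^n) (\<lambda>_. 0)" by (rule En_eq[OF gm])
    also have "\<dots> \<le> BW f (2^n) (\<lambda>_. 0)" by (rule bwd_mono[OF gm f(1)]) simp
    also have "\<dots> = ?E X" by (rule En_eq[OF f(1) f(2), symmetric])
    finally show "?E Y \<le> ?E X" .
  next
    fix c :: real
    have "?E (\<lambda>_. c) = BW (\<lambda>_. c) (2^n) (\<lambda>_. 0)" by (rule En_eq[OF cblip_const]) simp
    thus "?E (\<lambda>_. c) = c" by (simp add: bwd_const)
  next
    fix X Y assume X: "X \<in> ?H" and Y: "Y \<in> ?H"
    obtain f where f: "cblip II f" "X = (\<lambda>\<omega>. f (incmat d M N n \<omega>))" using X unfolding Hn_mem by blast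
    obtain g where g: "cblip II g" "Y = (\<lambda>\<omega>. g (incmat d M N n \<omega>))" using Y unfolding Hn_mem by blast
    have "?E (\<lambda>w. X w + Y w) = BW (\<lambda>z. f z + g z) (2^n) (\<lambda>_. 0)"
      by (rule En_eq[OF cblip_add[OF f(1) g(1)]]) (simp add: f g)
    also have "\<dots> \<le> BW f (2^n) (\<lambda>_. 0) + BW g (2^n) (\<lambda>_. 0)" by (rule bwd_add[OF f(1) g(1)])
    also have "\<dots> = ?E X + ?E Y" using En_eq[OF f(1) f(2)] En_eq[OF g(1) g(2)] by simp
    finally show "?E (\<lambda>w. X w + Y w) \<le> ?E X + ?E Y" .
  next
    fix l :: real and X assume l: "0 \<le> l" and X: "X \<in> ?H"
    obtain f where f: "cblip II f" "X = (\<lambda>\<omega>. f (incmat d M N n \<omega>))" using X unfolding Hn_mem by blast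
    have "?E (\<lambda>w. l * X w) = BW (\<lambda>z. l * f z) (2^n) (\<lambda>_. 0)"
      by (rule En_eq[OF cblip_scale[OF f(1)]]) (simp add: f)
    also have "\<dots> = l * BW f (2^n) (\<lambda>_. 0)" by (simp add: bwd_scale[OF f(1) l])
    also have "\<dots> = l * ?E X" using En_eq[OF f(1) f(2)] by simp
    finally show "?E (\<lambda>w. l * X w) = l * ?E X" .
  qed
  show ?thesis unfolding sublinear_expectation_space_def using z add sc comp se by blast
qed

end


context ctx begin

lemma part3:
  assumes j: "1 \<le> j" "j < 2^n"
  shows "indep (E_n E1 E2 d M N n) ({..<j} \<times> {..<2 * d}) {..<2 * d}
          (\<lambda>\<omega> (r, i). incr n (Xproc d M N) r \<omega> i) (\<lambda>\<omega> i. incr n (Xproc d M N) j \<omega> i)"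
  unfolding indep_def
proof (intro allI impI)
  fix \<phi> :: "(nat \<times> nat + nat \<Rightarrow> real) \<Rightarrow> real"
  define J where "J = ({..<j} \<times> {..<2 * d}) <+> {..<2 * d}"
  assume "cblip (({..<j} \<times> {..<2 * d}) <+> {..<2 * d}) \<phi>"
  hence c: "cblip J \<phi>" unfolding J_def .
  have finJ: "finite J" unfolding J_def by simp
  have dJ: "dep J \<phi>" by (rule cblip_dep[OF c])
  have Xeq: "\<And>\<omega>. (\<lambda>(r, i). incr n (Xproc d M N) r \<omega> i) = incmat d M N n \<omega>"
    by (simp add: incmat_def)
  have Yeq: "\<And>\<omega>. (\<lambda>i. incr n (Xproc d M N) j \<omega> i) = (\<lambda>i. incmat d M N n \<omega> (j, i))"
    by (simp add: incmat_def)
  define m0 where "m0 = 2^n - Suc j"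
  have m0: "2^n - m0 = Suc j" "2^n - Suc m0 = j" "Suc m0 + j = 2^n" using j unfolding m0_def by auto
  define \<Psi> where "\<Psi> = (\<lambda>z. \<phi> (case_sum z (\<lambda>i. z (j, i))))"
  define \<Phi> where "\<Phi> = (\<lambda>a z. \<phi> (case_sum a (\<lambda>i. z (j, i))))"
  define G where "G = (\<lambda>x. step1 E1 E2 d M N n j (\<lambda>y. \<phi> (case_sum x y)))"
  have cPsi: "cblip II \<Psi>" unfolding \<Psi>_def
  proof (rule cblip_comp[OF finJ c, where C=1])
    fix u u' :: "nat\<times>nat \<Rightarrow> real" and c assume "c \<in> J"
    thus "\<bar>case_sum u (\<lambda>i. u (j, i)) c - case_sum u' (\<lambda>i. u' (j, i)) c\<bar> \<le> 1 * vnorm II (\<lambda>j. u j - u' j)"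
      unfolding J_def using j
      by (auto intro!: vnorm_coord[of II _ "\<lambda>j. u j - u' j", simplified])
  qed
  have cPhi: "cblip II (\<Phi> a)" for a unfolding \<Phi>_def
  proof (rule cblip_comp[OF finJ c, where C=1])
    fix u u' :: "nat\<times>nat \<Rightarrow> real" and c assume "c \<in> J"
    thus "\<bar>case_sum a (\<lambda>i. u (j, i)) c - case_sum a (\<lambda>i. u' (j, i)) c\<bar> \<le> 1 * vnorm II (\<lambda>j. u j - u' j)"
      unfolding J_def using j
      by (auto simp: vnorm_nonneg intro!: vnorm_coord[of II _ "\<lambda>j. u j - u' j", simplified])
  qed
  have inner: "BW (\<Phi> a) (2^n) x0 = G a" for a x0
  proof -
    have "dep {c. fst c < 2^n - m0} (\<Phi> a)" unfolding dep_def \<Phi>_def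
    proof (intro allI impI)
      fix x y :: "nat\<times>nat \<Rightarrow> real" assume "\<forall>c\<in>{c. fst c < 2 ^ n - m0}. x c = y c"
      hence "\<And>i. x (j, i) = y (j, i)" using m0 by auto
      thus "\<phi> (case_sum a (\<lambda>i. x (j, i))) = \<phi> (case_sum a (\<lambda>i. y (j, i)))" by simp
    qed
    hence t: "BW (\<Phi> a) m0 = \<Phi> a" by (rule bwd_triv)
    have "BW (\<Phi> a) (Suc m0) = (\<lambda>_. G a)"
      by (rule ext, simp only: bwd.simps(2) m0(2) t) (simp add: \<Phi>_def G_def rowupd_def)
    from bwd_from_const[OF this, of j] have "BW (\<Phi> a) (2^n) = (\<lambda>_. G a)" by (simp only: m0(3))
    thus ?thesis by simp
  qed
  have dG: "dep {c. fst c < 2^n - Suc m0} G" unfolding dep_def G_def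
  proof (intro allI impI)
    fix x y :: "nat\<times>nat \<Rightarrow> real" assume h: "\<forall>c\<in>{c. fst c < 2 ^ n - Suc m0}. x c = y c"
    have "\<And>v. \<phi> (case_sum x v) = \<phi> (case_sum y v)"
      by (rule depD[OF dJ]) (use h m0 in \<open>auto simp: J_def\<close>)
    thus "step1 E1 E2 d M N n j (\<lambda>v. \<phi> (case_sum x v)) = step1 E1 E2 d M N n j (\<lambda>v. \<phi> (case_sum y v))"
      by simp
  qed
  have sPsi: "BW \<Psi> (Suc m0) = G"
  proof -
    have "dep {c. fst c < 2^n - m0} \<Psi>" unfolding dep_def \<Psi>_def
    proof (intro allI impI)
      fix x y :: "nat\<times>nat \<Rightarrow> real" assume h: "\<forall>c\<in>{c. fst c < 2 ^ n - m0}. x c = y c"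
      show "\<phi> (case_sum x (\<lambda>i. x (j, i))) = \<phi> (case_sum y (\<lambda>i. y (j, i)))"
        by (rule depD[OF dJ]) (use h m0 j in \<open>auto simp: J_def\<close>)
    qed
    hence t: "BW \<Psi> m0 = \<Psi>" by (rule bwd_triv)
    have "\<And>x y. \<Psi> (rowupd x j y) = \<phi> (case_sum x y)" unfolding \<Psi>_def
      by (rule depD[OF dJ]) (auto simp: J_def rowupd_def)
    thus ?thesis by (intro ext) (simp add: t m0 G_def)
  qed
  have cG: "cblip II G" using bwd_cblip[OF cPsi, of "Suc m0"] sPsi by simp
  have sG: "BW G (Suc m0) = G" using bwd_triv[OF dG] .
  have eqK: "BW \<Psi> (2^n) = BW G (2^n)"
  proof -
    have "BW \<Psi> (Suc m0) = BW G (Suc m0)" using sPsi sG by (simp only:)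
    from bwd_shift[OF this, of j] show ?thesis by (simp only: m0(3))
  qed
  have L: "E_n E1 E2 d M N n (\<lambda>w. \<phi> (case_sum ((\<lambda>\<omega> (r, i). incr n (Xproc d M N) r \<omega> i) w) ((\<lambda>\<omega> i. incr n (Xproc d M N) j \<omega> i) w)))
      = BW \<Psi> (2^n) (\<lambda>_. 0)"
    by (rule En_eq[OF cPsi]) (simp add: Xeq Yeq \<Psi>_def)
  have R: "E_n E1 E2 d M N n (\<lambda>w. E_n E1 E2 d M N n (\<lambda>w'. \<phi> (case_sum ((\<lambda>\<omega> (r, i). incr n (Xproc d M N) r \<omega> i) w) ((\<lambda>\<omega> i. incr n (Xproc d M N) j \<omega> i) w'))))
      = BW G (2^n) (\<lambda>_. 0)"
  proof -
    have "\<And>w. E_n E1 E2 d M N n (\<lambda>w'. \<phi> (case_sum ((\<lambda>\<omega> (r, i). incr n (Xproc d M N) r \<omega> i) w) ((\<lambda>\<omega> i. incr n (Xproc d M N) j \<omega> i) w')))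
       = G (incmat d M N n w)"
    proof -
      fix w
      have "E_n E1 E2 d M N n (\<lambda>w'. \<phi> (case_sum ((\<lambda>\<omega> (r, i). incr n (Xproc d M N) r \<omega> i) w) ((\<lambda>\<omega> i. incr n (Xproc d M N) j \<omega> i) w')))
         = BW (\<Phi> (incmat d M N n w)) (2^n) (\<lambda>_. 0)"
        by (rule En_eq[OF cPhi]) (simp add: Xeq Yeq \<Phi>_def)
      thus "?thesis w" using inner by simp
    qed
    hence "(\<lambda>w. E_n E1 E2 d M N n (\<lambda>w'. \<phi> (case_sum ((\<lambda>\<omega> (r, i). incr n (Xproc d M N) r \<omega> i) w) ((\<lambda>\<omega> i. incr n (Xproc d M N) j \<omega> i) w'))))
       = (\<lambda>w. G (incmat d M N n w))" by (rule ext)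
    thus ?thesis by (simp add: En_eq[OF cG])
  qed
  show "E_n E1 E2 d M N n (\<lambda>w. \<phi> (case_sum ((\<lambda>\<omega> (r, i). incr n (Xproc d M N) r \<omega> i) w) ((\<lambda>\<omega> i. incr n (Xproc d M N) j \<omega> i) w)))
      = E_n E1 E2 d M N n (\<lambda>w. E_n E1 E2 d M N n (\<lambda>w'. \<phi> (case_sum ((\<lambda>\<omega> (r, i). incr n (Xproc d M N) r \<omega> i) w) ((\<lambda>\<omega> i. incr n (Xproc d M N) j \<omega> i) w'))))"
    using L R eqK by simp
qed

lemma part4:
  assumes c: "cblip IM \<phi>"
  shows "E_n E1 E2 d M N n (\<lambda>\<omega>. \<phi> (\<lambda>(j, i). incr n (Mtil M) j \<omega> i)) = E1 (\<lambda>w. \<phi> (\<lambda>(j, i). incr n M j w i))"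
proof -
  have dI: "dep IM \<phi>" by (rule cblip_dep[OF c])
  have cI: "cblip II \<phi>" by (rule cblip_restrict[OF _ c dI]) auto
  have dm: "dep {c. snd c < d} \<phi>" by (rule dep_mono[OF dI]) auto
  have "(\<lambda>\<omega>. \<phi> (\<lambda>(j, i). incr n (Mtil M) j \<omega> i)) = (\<lambda>\<omega>. \<phi> (incmat d M N n \<omega>))"
  proof
    fix \<omega> :: "'a \<times> 'b"
    obtain w1 w2 where w: "\<omega> = (w1, w2)" by (cases \<omega>)
    show "\<phi> (\<lambda>(j, i). incr n (Mtil M) j \<omega> i) = \<phi> (incmat d M N n \<omega>)"
      by (rule depD[OF dI]) (auto simp: w incmat_eq incr_def Mtil_def)
  qed
  hence "E_n E1 E2 d M N n (\<lambda>\<omega>. \<phi> (\<lambda>(j, i). incr n (Mtil M) j \<omega> i)) = BW \<phi> (2^n) (\<lambda>_. 0)"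
    by (rule En_eq[OF cI])
  also have "\<dots> = E1 (\<lambda>w. \<phi> (\<lambda>(j, i). incr n M j w i))" by (rule VM[OF cI dm])
  finally show ?thesis .
qed

lemma part5:
  assumes c: "cblip IM \<phi>"
  shows "E_n E1 E2 d M N n (\<lambda>\<omega>. \<phi> (\<lambda>(j, i). incr n (Ntil N) j \<omega> i)) = E2 (\<lambda>w. \<phi> (\<lambda>(j, i). incr n N j w i))"
proof -
  define \<Psi> where "\<Psi> = (\<lambda>z. \<phi> (\<lambda>(j, i). z (j, i + d)))"
  have cI: "cblip II \<Psi>" unfolding \<Psi>_def
  proof (rule cblip_comp[OF _ c, where C=1])
    fix u u' :: "nat\<times>nat \<Rightarrow> real" and c assume "c \<in> IM"
    thus "\<bar>(case c of (j, i) \<Rightarrow> u (j, i + d)) - (case c of (j, i) \<Rightarrow> u' (j, i + d))\<bar> \<le> 1 * vnorm II (\<lambda>j. u j - u' j)"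
      using vnorm_coord[of II "(fst c, snd c + d)" "\<lambda>j. u j - u' j"] by (cases c) auto
  qed simp
  have dm: "dep {c. d \<le> snd c} \<Psi>" unfolding dep_def \<Psi>_def
  proof (intro allI impI)
    fix x y :: "nat\<times>nat \<Rightarrow> real" assume "\<forall>c\<in>{c. d \<le> snd c}. x c = y c"
    hence "(\<lambda>(j, i). x (j, i + d)) = (\<lambda>(j, i). y (j, i + d))" by auto
    thus "\<phi> (\<lambda>(j, i). x (j, i + d)) = \<phi> (\<lambda>(j, i). y (j, i + d))" by simp
  qed
  have "(\<lambda>\<omega>. \<phi> (\<lambda>(j, i). incr n (Ntil N) j \<omega> i)) = (\<lambda>\<omega>. \<Psi> (incmat d M N n \<omega>))"
  proof
    fix \<omega> :: "'a \<times> 'b"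
    obtain w1 w2 where w: "\<omega> = (w1, w2)" by (cases \<omega>)
    have "(\<lambda>(j, i). incr n (Ntil N) j \<omega> i) = (\<lambda>(j, i). incmat d M N n \<omega> (j, i + d))"
      by (auto simp: w incmat_eq incr_def Ntil_def fun_eq_iff)
    thus "\<phi> (\<lambda>(j, i). incr n (Ntil N) j \<omega> i) = \<Psi> (incmat d M N n \<omega>)" unfolding \<Psi>_def by simp
  qed
  hence "E_n E1 E2 d M N n (\<lambda>\<omega>. \<phi> (\<lambda>(j, i). incr n (Ntil N) j \<omega> i)) = BW \<Psi> (2^n) (\<lambda>_. 0)"
    by (rule En_eq[OF cI])
  also have "\<dots> = E2 (\<lambda>w. \<Psi> (shN (\<lambda>(j,i). incr n N j w i)))" by (rule VN[OF cI dm])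
  also have "(\<lambda>w. \<Psi> (shN (\<lambda>(j,i). incr n N j w i))) = (\<lambda>w. \<phi> (\<lambda>(j, i). incr n N j w i))"
    unfolding \<Psi>_def shN_def by simp
  finally show ?thesis .
qed

end


theorem lemma3p2:
  fixes H1 :: "('a \<Rightarrow> real) set" and E1 :: "('a \<Rightarrow> real) \<Rightarrow> real"
    and H2 :: "('b \<Rightarrow> real) set" and E2 :: "('b \<Rightarrow> real) \<Rightarrow> real"
    and d n :: nat
    and M :: "real \<Rightarrow> 'a \<Rightarrow> nat \<Rightarrow> real" and N :: "real \<Rightarrow> 'b \<Rightarrow> nat \<Rightarrow> real"
  assumes S1: "sublinear_expectation_space H1 E1"
    and S2: "sublinear_expectation_space H2 E2"
    and PM: "process_in H1 d M" and PN: "process_in H2 d N"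
    and IM: "indep_increments E1 d M" and IN: "indep_increments E2 d N"
    and A: "condition_A H1 E1 H2 E2 d M N"
    and n: "n \<ge> 1"
  shows
    \<comment> \<open>E^n is well defined: phi_0 depends only on the random variable phi(increments)\<close>
    "(\<forall>\<phi> \<phi>'. cblip ({..<2 ^ n} \<times> {..<2 * d}) \<phi> \<and> cblip ({..<2 ^ n} \<times> {..<2 * d}) \<phi>' \<and>
        (\<forall>\<omega>. \<phi> (incmat d M N n \<omega>) = \<phi>' (incmat d M N n \<omega>)) \<longrightarrow>
        val_n E1 E2 d M N n \<phi> = val_n E1 E2 d M N n \<phi>')
   \<and> sublinear_expectation_space (H_n d M N n) (E_n E1 E2 d M N n)
   \<and> (\<forall>j. 1 \<le> j \<and> j < 2 ^ n \<longrightarrow>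
        indep (E_n E1 E2 d M N n) ({..<j} \<times> {..<2 * d}) {..<2 * d}
          (\<lambda>\<omega> (r, i). incr n (Xproc d M N) r \<omega> i) (\<lambda>\<omega> i. incr n (Xproc d M N) j \<omega> i))
   \<and> (\<forall>\<phi>. cblip ({..<2 ^ n} \<times> {..<d}) \<phi> \<longrightarrow>
        E_n E1 E2 d M N n (\<lambda>\<omega>. \<phi> (\<lambda>(j, i). incr n (Mtil M) j \<omega> i))
        = E1 (\<lambda>w. \<phi> (\<lambda>(j, i). incr n M j w i)))
   \<and> (\<forall>\<phi>. cblip ({..<2 ^ n} \<times> {..<d}) \<phi> \<longrightarrow>
        E_n E1 E2 d M N n (\<lambda>\<omega>. \<phi> (\<lambda>(j, i). incr n (Ntil N) j \<omega> i))
        = E2 (\<lambda>w. \<phi> (\<lambda>(j, i). incr n N j w i)))"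
  proof -
  interpret ctx H1 E1 H2 E2 d n M N by (rule ctx.intro[OF S1 S2 PM PN IM IN])
  show ?thesis
  proof (intro conjI)
    show "\<forall>\<phi> \<phi>'. cblip ({..<2 ^ n} \<times> {..<2 * d}) \<phi> \<and> cblip ({..<2 ^ n} \<times> {..<2 * d}) \<phi>' \<and>
        (\<forall>\<omega>. \<phi> (incmat d M N n \<omega>) = \<phi>' (incmat d M N n \<omega>)) \<longrightarrow>
        val_n E1 E2 d M N n \<phi> = val_n E1 E2 d M N n \<phi>'"
      unfolding val_n_def using WD by blast
    show "sublinear_expectation_space (H_n d M N n) (E_n E1 E2 d M N n)" by (rule part2)
    show "\<forall>j. 1 \<le> j \<and> j < 2 ^ n \<longrightarrow>
        indep (E_n E1 E2 d M N n) ({..<j} \<times> {..<2 * d}) {..<2 * d}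
          (\<lambda>\<omega> (r, i). incr n (Xproc d M N) r \<omega> i) (\<lambda>\<omega> i. incr n (Xproc d M N) j \<omega> i)"
      using part3 by blast
    show "\<forall>\<phi>. cblip ({..<2 ^ n} \<times> {..<d}) \<phi> \<longrightarrow>
        E_n E1 E2 d M N n (\<lambda>\<omega>. \<phi> (\<lambda>(j, i). incr n (Mtil M) j \<omega> i))
        = E1 (\<lambda>w. \<phi> (\<lambda>(j, i). incr n M j w i))"
      using part4 by blast
    show "\<forall>\<phi>. cblip ({..<2 ^ n} \<times> {..<d}) \<phi> \<longrightarrow>
        E_n E1 E2 d M N n (\<lambda>\<omega>. \<phi> (\<lambda>(j, i). incr n (Ntil N) j \<omega> i))
        = E2 (\<lambda>w. \<phi> (\<lambda>(j, i). incr n N j w i))"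
      using part5 by blast
  qed
qed

end
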